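(* Let $\mathfrak g$ be a finite-dimensional Lie algebra over a field $\mathbb K$ of characteristic zero having an ideal $\mathfrak h_m$ isomorphic to the Heisenberg algebra of dimension $2m+1$, such that the center of $\mathfrak g$ coincides with the center of $\mathfrak h_m$. Let $\mathcal A$ be a commutative subalgebra of $\operatorname{Ann}(\mathfrak h_m)$ complete in $\operatorname{Ann}(\mathfrak h_m)$, and $\mathcal B$ a complete commutative subalgebra of $S(\mathfrak h_m)$. Then $\mathcal A+\mathcal B$ is complete in $S(\mathfrak g)$.
   Context: The Heisenberg algebra $\mathfrak h_m$ is $V\oplus\mathbb K e$ with $\dim V=2m$, $e$ central and $[\xi_1,\xi_2]=\omega(\xi_1,\xi_2)e$ for $\xi_i\in V$, $\omega$ a symplectic form on $V$. $S(\mathfrak g)$ is the polynomial algebra on $\mathfrak g^*$ with Lie–Poisson bracket $\{f,g\}(x)=\langle x,[df(x),dg(x)]\rangle$; $S(\mathfrak h_m)\subset S(\mathfrak g)$. $\Phi_x(\xi,\eta)=\langle x,[\xi,\eta]\rangle$. $\operatorname{Ann}(\mathfrak h_m)=\{f\in S(\mathfrak g)\mid\{f,\eta\}=0\ \forall\eta\in\mathfrak h_m\}$. For a subalgebra $\mathcal F$, $d\mathcal F(x)$ is the span of the differentials of its elements at $x$; a commutative $\mathcal A\subset\mathcal F$ is complete in $\mathcal F$ if $d\mathcal A(x)$ is maximal $\Phi_x$-isotropic in $d\mathcal F(x)$ for generic $x\in\mathfrak g^*$. A commutative subalgebra of $S(\mathfrak l)$ is complete if its transcendence degree is $\frac12(\dim\mathfrak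 l+\operatorname{ind}\mathfrak l)$ (index = generic corank of $\Phi_x$), equivalently complete in $S(\mathfrak l)$ in the previous sense. $\mathcal A+\mathcal B$ is the smallest Poisson subalgebra containing both. *)

theory Defs
  imports Main "HOL-Library.Poly_Mapping" "HOL-Library.Function_Algebras"
begin

text \<open>The Lie algebra g has a basis indexed by a finite type 'n. Elements of g (and
of g*, via the dual basis) are functions 'n => 'k. The Lie bracket is given by
structure constants c i j k: [e_i, e_j] = sum_k c i j k e_k.\<close>

type_synonym ('n, 'k) vec = "'n \<Rightarrow> 'k"

definition vscale :: "'k::field \<Rightarrow> ('n, 'k) vec \<Rightarrow> ('n, 'k) vec" where
  "vscale a v = (\<lambda>i. a * v i)"

definition kspan :: "('n, 'k::field) vec set \<Rightarrow> ('n, 'k) vec set" where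
  "kspan X = {v. \<exists>S a. finite S \<and> S \<subseteq> X \<and> v = (\<lambda>i. \<Sum>u\<in>S. a u * u i)}"

definition is_subspace :: "('n, 'k::field) vec set \<Rightarrow> bool" where
  "is_subspace U \<longleftrightarrow> 0 \<in> U \<and> (\<forall>u\<in>U. \<forall>v\<in>U. u + v \<in> U) \<and> (\<forall>a. \<forall>u\<in>U. vscale a u \<in> U)"

definition lin_indep :: "('n, 'k::field) vec set \<Rightarrow> bool" where
  "lin_indep B \<longleftrightarrow> (\<forall>a. (\<lambda>i. \<Sum>u\<in>B. a u * u i) = 0 \<longrightarrow> (\<forall>u\<in>B. a u = 0))"

definition has_dim :: "('n, 'k::field) vec set \<Rightarrow> nat \<Rightarrow> bool" where
  "has_dim U d \<longleftrightarrow> (\<exists>B. finite B \<and> card B = d \<and> lin_indep B \<and> kspan B = U)"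

definition bracket :: "('n::finite \<Rightarrow> 'n \<Rightarrow> 'n \<Rightarrow> 'k::field) \<Rightarrow> ('n, 'k) vec \<Rightarrow> ('n, 'k) vec \<Rightarrow> ('n, 'k) vec" where
  "bracket c \<xi> \<eta> = (\<lambda>k. \<Sum>i\<in>UNIV. \<Sum>j\<in>UNIV. c i j k * \<xi> i * \<eta> j)"

definition is_lie_algebra :: "('n::finite \<Rightarrow> 'n \<Rightarrow> 'n \<Rightarrow> 'k::field) \<Rightarrow> bool" where
  "is_lie_algebra c \<longleftrightarrow>
     (\<forall>\<xi>. bracket c \<xi> \<xi> = 0) \<and>
     (\<forall>\<xi> \<eta> \<zeta>. bracket c (bracket c \<xi> \<eta>) \<zeta> + bracket c (bracket c \<eta> \<zeta>) \<xi>
                 + bracket c (bracket c \<zeta> \<xi>) \<eta> = 0)"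

definition is_ideal :: "('n::finite \<Rightarrow> 'n \<Rightarrow> 'n \<Rightarrow> 'k::field) \<Rightarrow> ('n, 'k) vec set \<Rightarrow> bool" where
  "is_ideal c h \<longleftrightarrow> is_subspace h \<and> (\<forall>\<xi>\<in>h. \<forall>\<eta>. bracket c \<xi> \<eta> \<in> h)"

definition center :: "('n::finite \<Rightarrow> 'n \<Rightarrow> 'n \<Rightarrow> 'k::field) \<Rightarrow> ('n, 'k) vec set \<Rightarrow> ('n, 'k) vec set" where
  "center c h = {z \<in> h. \<forall>y\<in>h. bracket c z y = 0}"

definition symplectic_on :: "('n, 'k::field) vec set \<Rightarrow> (('n, 'k) vec \<Rightarrow> ('n, 'k) vec \<Rightarrow> 'k) \<Rightarrow> bool" where
  "symplectic_on V \<omega> \<longleftrightarrow>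
     (\<forall>u\<in>V. \<forall>v\<in>V. \<forall>w\<in>V. \<forall>a b. \<omega> (vscale a u + vscale b v) w = a * \<omega> u w + b * \<omega> v w
                              \<and> \<omega> w (vscale a u + vscale b v) = a * \<omega> w u + b * \<omega> w v) \<and>
     (\<forall>u\<in>V. \<omega> u u = 0) \<and>
     (\<forall>u\<in>V. (\<forall>v\<in>V. \<omega> u v = 0) \<longrightarrow> u = 0)"

definition is_heisenberg :: "('n::finite \<Rightarrow> 'n \<Rightarrow> 'n \<Rightarrow> 'k::field) \<Rightarrow> ('n, 'k) vec set \<Rightarrow> nat \<Rightarrow> bool" where
  "is_heisenberg c h m \<longleftrightarrow>
     (\<exists>V e \<omega>. is_subspace V \<and> has_dim V (2 * m) \<and> e \<noteq> 0 \<and> e \<notin> V \<and>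
        h = {v + vscale a e | v a. v \<in> V} \<and>
        (\<forall>\<xi>\<in>h. bracket c e \<xi> = 0 \<and> bracket c \<xi> e = 0) \<and>
        symplectic_on V \<omega> \<and>
        (\<forall>\<xi>1\<in>V. \<forall>\<xi>2\<in>V. bracket c \<xi>1 \<xi>2 = vscale (\<omega> \<xi>1 \<xi>2) e))"

text \<open>Polynomials in the variables X_i (= basis vector e_i as a linear function on g*).\<close>
type_synonym ('n, 'k) poly = "('n \<Rightarrow>\<^sub>0 nat) \<Rightarrow>\<^sub>0 'k"

definition pconst :: "'k::field \<Rightarrow> ('n, 'k) poly" where
  "pconst a = Poly_Mapping.single 0 a"

definition pvar :: "'n \<Rightarrow> ('n, 'k::field) poly" where
  "pvar i = Poly_Mapping.single (Poly_Mapping.single i 1) 1"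

definition plin :: "('n::finite, 'k::field) vec \<Rightarrow> ('n, 'k) poly" where
  "plin \<xi> = (\<Sum>i\<in>UNIV. pconst (\<xi> i) * pvar i)"

definition peval :: "('n, 'k::field) poly \<Rightarrow> ('n, 'k) vec \<Rightarrow> 'k" where
  "peval f x = (\<Sum>m\<in>Poly_Mapping.keys f.
      Poly_Mapping.lookup f m * (\<Prod>i\<in>Poly_Mapping.keys m. x i ^ Poly_Mapping.lookup m i))"

definition pderiv_var :: "'n \<Rightarrow> ('n, 'k::field) poly \<Rightarrow> ('n, 'k) poly" where
  "pderiv_var i f = (\<Sum>m\<in>Poly_Mapping.keys f.
      Poly_Mapping.single (m - Poly_Mapping.single i 1)
        (of_nat (Poly_Mapping.lookup m i) * Poly_Mapping.lookup f m))"

definition pdiff :: "('n, 'k::field) poly \<Rightarrow> ('n, 'k) vec \<Rightarrow> ('n, 'k) vec" where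
  "pdiff f x = (\<lambda>i. peval (pderiv_var i f) x)"

text \<open>Lie-Poisson bracket: {f,g}(x) = <x, [df(x), dg(x)]>.\<close>
definition pbracket :: "('n::finite \<Rightarrow> 'n \<Rightarrow> 'n \<Rightarrow> 'k::field) \<Rightarrow> ('n, 'k) poly \<Rightarrow> ('n, 'k) poly \<Rightarrow> ('n, 'k) poly" where
  "pbracket c f g = (\<Sum>i\<in>UNIV. \<Sum>j\<in>UNIV. \<Sum>k\<in>UNIV.
      pconst (c i j k) * pvar k * pderiv_var i f * pderiv_var j g)"

definition Phi :: "('n::finite \<Rightarrow> 'n \<Rightarrow> 'n \<Rightarrow> 'k::field) \<Rightarrow> ('n, 'k) vec \<Rightarrow> ('n, 'k) vec \<Rightarrow> ('n, 'k) vec \<Rightarrow> 'k" where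
  "Phi c x \<xi> \<eta> = (\<Sum>k\<in>UNIV. x k * bracket c \<xi> \<eta> k)"

definition is_subalgebra :: "('n, 'k::field) poly set \<Rightarrow> bool" where
  "is_subalgebra A \<longleftrightarrow> (\<forall>a. pconst a \<in> A) \<and> (\<forall>f\<in>A. \<forall>g\<in>A. f + g \<in> A \<and> f * g \<in> A)"

definition poisson_commutative :: "('n::finite \<Rightarrow> 'n \<Rightarrow> 'n \<Rightarrow> 'k::field) \<Rightarrow> ('n, 'k) poly set \<Rightarrow> bool" where
  "poisson_commutative c A \<longleftrightarrow> (\<forall>f\<in>A. \<forall>g\<in>A. pbracket c f g = 0)"

inductive_set alg_gen :: "('n, 'k::field) poly set \<Rightarrow> ('n, 'k) poly set" for G where
  const: "pconst a \<in> alg_gen G"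
| gen: "f \<in> G \<Longrightarrow> f \<in> alg_gen G"
| add: "f \<in> alg_gen G \<Longrightarrow> g \<in> alg_gen G \<Longrightarrow> f + g \<in> alg_gen G"
| mult: "f \<in> alg_gen G \<Longrightarrow> g \<in> alg_gen G \<Longrightarrow> f * g \<in> alg_gen G"

text \<open>S(h) as a subalgebra of S(g): generated by the elements of h.\<close>
definition Sym :: "('n::finite, 'k::field) vec set \<Rightarrow> ('n, 'k) poly set" where
  "Sym h = alg_gen (plin ` h)"

text \<open>Smallest Poisson subalgebra containing G (A + B is poisson_gen c (A \<union> B)).\<close>
inductive_set poisson_gen :: "('n::finite \<Rightarrow> 'n \<Rightarrow> 'n \<Rightarrow> 'k::field) \<Rightarrow> ('n, 'k) poly set \<Rightarrow> ('n, 'k) poly set"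
  for c G where
  const: "pconst a \<in> poisson_gen c G"
| gen: "f \<in> G \<Longrightarrow> f \<in> poisson_gen c G"
| add: "f \<in> poisson_gen c G \<Longrightarrow> g \<in> poisson_gen c G \<Longrightarrow> f + g \<in> poisson_gen c G"
| mult: "f \<in> poisson_gen c G \<Longrightarrow> g \<in> poisson_gen c G \<Longrightarrow> f * g \<in> poisson_gen c G"
| br: "f \<in> poisson_gen c G \<Longrightarrow> g \<in> poisson_gen c G \<Longrightarrow> pbracket c f g \<in> poisson_gen c G"

definition Ann :: "('n::finite \<Rightarrow> 'n \<Rightarrow> 'n \<Rightarrow> 'k::field) \<Rightarrow> ('n, 'k) vec set \<Rightarrow> ('n, 'k) poly set" where
  "Ann c h = {f. \<forall>\<eta>\<in>h. pbracket c f (plin \<eta>) = 0}"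

definition dspan :: "('n, 'k::field) poly set \<Rightarrow> ('n, 'k) vec \<Rightarrow> ('n, 'k) vec set" where
  "dspan F x = kspan ((\<lambda>f. pdiff f x) ` F)"

definition isotropic :: "('n::finite \<Rightarrow> 'n \<Rightarrow> 'n \<Rightarrow> 'k::field) \<Rightarrow> ('n, 'k) vec \<Rightarrow> ('n, 'k) vec set \<Rightarrow> bool" where
  "isotropic c x U \<longleftrightarrow> (\<forall>u\<in>U. \<forall>v\<in>U. Phi c x u v = 0)"

definition max_isotropic_in :: "('n::finite \<Rightarrow> 'n \<Rightarrow> 'n \<Rightarrow> 'k::field) \<Rightarrow> ('n, 'k) vec \<Rightarrow> ('n, 'k) vec set \<Rightarrow> ('n, 'k) vec set \<Rightarrow> bool" where
  "max_isotropic_in c x U W \<longleftrightarrow> is_subspace U \<and> U \<subseteq> W \<and> isotropic c x U \<and>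
     (\<forall>U'. is_subspace U' \<and> U \<subseteq> U' \<and> U' \<subseteq> W \<and> isotropic c x U' \<longrightarrow> U' = U)"

text \<open>A property holds for generic x in g*: on the complement of the zero set of a
nonzero polynomial (a nonempty Zariski-open set).\<close>
definition generically :: "(('n, 'k::field) vec \<Rightarrow> bool) \<Rightarrow> bool" where
  "generically P \<longleftrightarrow> (\<exists>p :: ('n, 'k) poly. p \<noteq> 0 \<and> (\<forall>x. peval p x \<noteq> 0 \<longrightarrow> P x))"

definition complete_in :: "('n::finite \<Rightarrow> 'n \<Rightarrow> 'n \<Rightarrow> 'k::field) \<Rightarrow> ('n, 'k) poly set \<Rightarrow> ('n, 'k) poly set \<Rightarrow> bool" where
  "complete_in c A F \<longleftrightarrow> generically (\<lambda>x. max_isotropic_in c x (dspan A x) (dspan F x))"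

end

theory Submission
  imports Defs "HOL.Vector_Spaces"
begin

abbreviation mono :: "('n::finite, 'k::field) vec \<Rightarrow> ('n \<Rightarrow>\<^sub>0 nat) \<Rightarrow> 'k" where
  "mono x m \<equiv> (\<Prod>i\<in>UNIV. x i ^ Poly_Mapping.lookup m i)"

lemma poly_expand: "f = (\<Sum>m\<in>Poly_Mapping.keys f. Poly_Mapping.single m (Poly_Mapping.lookup f m))"
proof (rule poly_mapping_eqI)
  fix k
  have "Poly_Mapping.lookup (\<Sum>m\<in>Poly_Mapping.keys f. Poly_Mapping.single m (Poly_Mapping.lookup f m)) k
     = (\<Sum>m\<in>Poly_Mapping.keys f. (if m = k then Poly_Mapping.lookup f m else 0))"
    by (simp add: lookup_sum lookup_single when_def eq_commute)
  also have "\<dots> = Poly_Mapping.lookup f k"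
    by (simp add: sum.delta in_keys_iff)
  finally show "Poly_Mapping.lookup f k = Poly_Mapping.lookup (\<Sum>m\<in>Poly_Mapping.keys f. Poly_Mapping.single m (Poly_Mapping.lookup f m)) k" by simp
qed

lemma peval_super:
  fixes f :: "('n::finite, 'k::field) poly"
  assumes "finite S" "Poly_Mapping.keys f \<subseteq> S"
  shows "peval f x = (\<Sum>m\<in>S. Poly_Mapping.lookup f m * mono x m)"
proof -
  have "peval f x = (\<Sum>m\<in>Poly_Mapping.keys f. Poly_Mapping.lookup f m * mono x m)"
    unfolding peval_def
    apply (rule sum.cong[OF refl])
    apply (rule arg_cong[where f="\<lambda>t. _ * t"])
    apply (rule prod.mono_neutral_left)
      apply (auto simp: in_keys_iff)
    done
  also have "\<dots> = (\<Sum>m\<in>S. Poly_Mapping.lookup f m * mono x m)"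
    by (rule sum.mono_neutral_left) (use assms in \<open>auto simp: in_keys_iff\<close>)
  finally show ?thesis .
qed

lemma peval_add: "peval (f + g) x = peval f x + peval g x" for f g :: "('n::finite, 'k::field) poly"
proof -
  let ?S = "Poly_Mapping.keys f \<union> Poly_Mapping.keys g"
  have "Poly_Mapping.keys (f+g) \<subseteq> ?S" by (rule keys_add)
  then show ?thesis
    by (simp add: peval_super[of ?S] lookup_add distrib_right sum.distrib)
qed

lemma peval_zero[simp]: "peval 0 x = 0"
  by (simp add: peval_def)

lemma peval_sum: "peval (\<Sum>i\<in>I. f i) x = (\<Sum>i\<in>I. peval (f i) x)" for f :: "_ \<Rightarrow> ('n::finite, 'k::field) poly"
  by (induction I rule: infinite_finite_induct) (auto simp: peval_add)

lemma peval_single: "peval (Poly_Mapping.single m a) x = a * mono x m" for x :: "('n::finite, 'k::field) vec"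
  by (subst peval_super[of "{m}"]) auto

lemma mono_add: "mono x (m + n) = mono x m * mono x n"
  by (simp add: lookup_add power_add prod.distrib)

lemma poly_mult_expand:
  "f * g = (\<Sum>m\<in>Poly_Mapping.keys f. \<Sum>n\<in>Poly_Mapping.keys g.
      Poly_Mapping.single m (Poly_Mapping.lookup f m) * Poly_Mapping.single n (Poly_Mapping.lookup g n))"
proof -
  have "f * g = (\<Sum>m\<in>Poly_Mapping.keys f. Poly_Mapping.single m (Poly_Mapping.lookup f m)) *
     (\<Sum>n\<in>Poly_Mapping.keys g. Poly_Mapping.single n (Poly_Mapping.lookup g n))"
    by (subst poly_expand[of f], subst poly_expand[of g]) (rule refl)
  then show ?thesis by (simp add: sum_product)
qed

lemma peval_mult: "peval (f * g) x = peval f x * peval g x" for f g :: "('n::finite, 'k::field) poly"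
proof -
  have "peval (f * g) x = (\<Sum>m\<in>Poly_Mapping.keys f. \<Sum>n\<in>Poly_Mapping.keys g.
      (Poly_Mapping.lookup f m * mono x m) * (Poly_Mapping.lookup g n * mono x n))"
    by (subst poly_mult_expand) (simp add: peval_sum mult_single peval_single mono_add mult_ac)
  also have "\<dots> = peval f x * peval g x"
    by (simp add: peval_super[of "Poly_Mapping.keys f" f, OF finite_keys order_refl]
        peval_super[of "Poly_Mapping.keys g" g, OF finite_keys order_refl] sum_product mult_ac)
  finally show ?thesis .
qed


lemma pd_super:
  fixes f :: "('n, 'k::field) poly"
  assumes "finite S" "Poly_Mapping.keys f \<subseteq> S"
  shows "pderiv_var i f = (\<Sum>m\<in>S. Poly_Mapping.single (m - Poly_Mapping.single i 1)
        (of_nat (Poly_Mapping.lookup m i) * Poly_Mapping.lookup f m))"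
  unfolding pderiv_var_def
  by (rule sum.mono_neutral_left) (use assms in \<open>auto simp: in_keys_iff\<close>)

lemma pd_add: "pderiv_var i (f + g) = pderiv_var i f + pderiv_var i g" for f g :: "('n, 'k::field) poly"
proof -
  let ?S = "Poly_Mapping.keys f \<union> Poly_Mapping.keys g"
  have "Poly_Mapping.keys (f+g) \<subseteq> ?S" by (rule keys_add)
  then show ?thesis
    by (simp add: pd_super[of ?S] lookup_add distrib_left sum.distrib single_add)
qed

lemma pd_zero[simp]: "pderiv_var i 0 = 0"
  by (simp add: pderiv_var_def)

lemma pd_sum: "pderiv_var i (\<Sum>j\<in>I. f j) = (\<Sum>j\<in>I. pderiv_var i (f j))" for f :: "_ \<Rightarrow> ('n, 'k::field) poly"
  by (induction I rule: infinite_finite_induct) (auto simp: pd_add)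

lemma pd_single: "pderiv_var i (Poly_Mapping.single m a) =
   Poly_Mapping.single (m - Poly_Mapping.single i 1) (of_nat (Poly_Mapping.lookup m i) * (a::'k::field))"
  by (subst pd_super[of "{m}"]) auto

lemma pd_single_mult:
  "pderiv_var i (Poly_Mapping.single m a * Poly_Mapping.single n b) =
     pderiv_var i (Poly_Mapping.single m a) * Poly_Mapping.single n b +
     Poly_Mapping.single m a * pderiv_var i (Poly_Mapping.single n (b::'k::field))"
proof -
  have e1: "m - Poly_Mapping.single i 1 + n = m + n - Poly_Mapping.single i 1" if "Poly_Mapping.lookup m i \<noteq> 0"
    by (rule poly_mapping_eqI) (use that in \<open>auto simp: lookup_add lookup_minus lookup_single when_def\<close>)
  have e2: "m + (n - Poly_Mapping.single i 1) = m + n - Poly_Mapping.single i 1" if "Poly_Mapping.lookup n i \<noteq> 0"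
    by (rule poly_mapping_eqI) (use that in \<open>auto simp: lookup_add lookup_minus lookup_single when_def\<close>)
  have A: "Poly_Mapping.single (m - Poly_Mapping.single i 1 + n) (of_nat (Poly_Mapping.lookup m i) * a * b)
     = Poly_Mapping.single (m + n - Poly_Mapping.single i 1) (of_nat (Poly_Mapping.lookup m i) * a * b)"
    by (cases "Poly_Mapping.lookup m i = 0") (simp, subst e1, simp_all)
  have B: "Poly_Mapping.single (m + (n - Poly_Mapping.single i 1)) (of_nat (Poly_Mapping.lookup n i) * a * b)
     = Poly_Mapping.single (m + n - Poly_Mapping.single i 1) (of_nat (Poly_Mapping.lookup n i) * a * b)"
    by (cases "Poly_Mapping.lookup n i = 0") (simp, subst e2, simp_all)
  show ?thesis
    apply (simp add: mult_single pd_single lookup_add)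
    apply (simp add: mult_ac)
    using A B by (simp add: single_add[symmetric] algebra_simps mult_ac)
qed

lemma pd_mult: "pderiv_var i (f * g) = pderiv_var i f * g + f * pderiv_var i g" for f g :: "('n, 'k::field) poly"
proof -
  define F where "F = (\<lambda>m. Poly_Mapping.single m (Poly_Mapping.lookup f m))"
  define G where "G = (\<lambda>m. Poly_Mapping.single m (Poly_Mapping.lookup g m))"
  have f: "f = (\<Sum>m\<in>Poly_Mapping.keys f. F m)" unfolding F_def by (rule poly_expand)
  have g: "g = (\<Sum>m\<in>Poly_Mapping.keys g. G m)" unfolding G_def by (rule poly_expand)
  have "pderiv_var i (f * g) = (\<Sum>m\<in>Poly_Mapping.keys f. \<Sum>n\<in>Poly_Mapping.keys g.
      pderiv_var i (F m) * G n + F m * pderiv_var i (G n))"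
    unfolding F_def G_def by (subst poly_mult_expand) (simp add: pd_sum pd_single_mult)
  also have "\<dots> = (\<Sum>m\<in>Poly_Mapping.keys f. \<Sum>n\<in>Poly_Mapping.keys g. pderiv_var i (F m) * G n)
      + (\<Sum>m\<in>Poly_Mapping.keys f. \<Sum>n\<in>Poly_Mapping.keys g. F m * pderiv_var i (G n))"
    by (simp add: sum.distrib)
  also have "\<dots> = pderiv_var i (\<Sum>m\<in>Poly_Mapping.keys f. F m) * (\<Sum>m\<in>Poly_Mapping.keys g. G m)
     + (\<Sum>m\<in>Poly_Mapping.keys f. F m) * pderiv_var i (\<Sum>m\<in>Poly_Mapping.keys g. G m)"
    by (simp add: pd_sum sum_product)
  also have "\<dots> = pderiv_var i f * g + f * pderiv_var i g"
    using f g by simp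
  finally show ?thesis .
qed


lemma pconst_mult: "pconst a * pconst b = pconst (a * b)"
  by (simp add: pconst_def mult_single)
lemma pconst_add: "pconst a + pconst b = pconst (a + b)"
  by (simp add: pconst_def single_add)
lemma pconst_0[simp]: "pconst 0 = 0" by (simp add: pconst_def)
lemma pconst_1[simp]: "pconst 1 = 1" by (simp add: pconst_def)
lemma pconst_sum: "pconst (\<Sum>i\<in>I. f i) = (\<Sum>i\<in>I. pconst (f i))"
  by (induction I rule: infinite_finite_induct) (auto simp: pconst_add[symmetric])
lemma pconst_uminus: "pconst (- a) = - pconst a"
  by (simp add: pconst_def single_uminus)

lemma peval_pconst[simp]: "peval (pconst a) x = a" for x :: "('n::finite, 'k::field) vec"
  by (simp add: pconst_def peval_single)

lemma peval_pvar[simp]: "peval (pvar i) x = x i" for x :: "('n::finite, 'k::field) vec"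
proof -
  have "(\<Prod>j\<in>UNIV. x j ^ Poly_Mapping.lookup (Poly_Mapping.single i 1) j) = (\<Prod>j\<in>UNIV. if j = i then x i else 1)"
    by (rule prod.cong) (auto simp: lookup_single when_def)
  then show ?thesis by (simp add: pvar_def peval_single)
qed

lemma peval_plin: "peval (plin v) x = (\<Sum>i\<in>UNIV. v i * x i)"
  by (simp add: plin_def peval_sum peval_mult)

lemma pd_pconst[simp]: "pderiv_var i (pconst a) = 0"
  by (simp add: pconst_def pd_single)

lemma pd_pvar: "pderiv_var i (pvar j) = pconst (if i = j then 1 else 0)"
  by (auto simp: pvar_def pd_single pconst_def lookup_single)

lemma pd_plin: "pderiv_var i (plin v) = pconst (v i)"
proof -
  have "pderiv_var i (plin v) = (\<Sum>j\<in>UNIV. pconst (v j) * pconst (if i = j then 1 else 0))"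
    by (simp add: plin_def pd_sum pd_mult pd_pvar)
  also have "\<dots> = (\<Sum>j\<in>UNIV. if j = i then pconst (v i) else 0)"
    by (rule sum.cong) auto
  finally show ?thesis by simp
qed

lemma pdiff_plin[simp]: "pdiff (plin v) x = v"
  by (simp add: pdiff_def pd_plin)

lemma pdiff_pconst[simp]: "pdiff (pconst a) x = 0"
  by (simp add: pdiff_def fun_eq_iff)

lemma pdiff_zero[simp]: "pdiff 0 x = 0"
  by (simp add: pdiff_def fun_eq_iff)

lemma pdiff_add: "pdiff (f + g) x = pdiff f x + pdiff g x" for f g :: "('n::finite, 'k::field) poly"
  by (simp add: pdiff_def fun_eq_iff pd_add peval_add)

lemma pdiff_mult: "pdiff (f * g) x = (\<lambda>i. peval f x * pdiff g x i + peval g x * pdiff f x i)"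
  for f g :: "('n::finite, 'k::field) poly"
  by (simp add: pdiff_def fun_eq_iff pd_mult peval_add peval_mult mult_ac)

lemma plin_add: "plin (u + v) = plin u + plin v"
  by (simp add: plin_def pconst_add[symmetric] distrib_right sum.distrib)

lemma plin_scale: "plin (vscale a u) = pconst a * plin u"
  by (simp add: plin_def vscale_def pconst_mult[symmetric] sum_distrib_left mult.assoc)

lemma plin_zero[simp]: "plin 0 = 0"
  by (simp add: plin_def)

lemma plin_uminus: "plin (- u) = - plin u"
  by (simp add: plin_def pconst_uminus sum_negf)

lemma plin_diff: "plin (u - v) = plin u - plin v"
  using plin_add[of u "-v"] by (simp add: plin_uminus)

lemma plin_eq_0: "plin v = 0 \<Longrightarrow> v = 0"
  by (metis pdiff_plin pdiff_zero)

lemma peval_pbracket: "peval (pbracket c f g) x = Phi c x (pdiff f x) (pdiff g x)"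
proof -
  have "peval (pbracket c f g) x = (\<Sum>i\<in>UNIV. \<Sum>j\<in>UNIV. \<Sum>k\<in>UNIV. x k * (c i j k * pdiff f x i * pdiff g x j))"
    by (simp add: pbracket_def peval_sum peval_mult pdiff_def mult_ac)
  also have "\<dots> = Phi c x (pdiff f x) (pdiff g x)"
  proof -
    have "(\<Sum>i\<in>UNIV. \<Sum>j\<in>UNIV. \<Sum>k\<in>UNIV. x k * (c i j k * pdiff f x i * pdiff g x j))
       = (\<Sum>i\<in>UNIV. \<Sum>k\<in>UNIV. \<Sum>j\<in>UNIV. x k * (c i j k * pdiff f x i * pdiff g x j))"
      by (rule sum.cong[OF refl], rule sum.swap)
    also have "\<dots> = (\<Sum>k\<in>UNIV. \<Sum>i\<in>UNIV. \<Sum>j\<in>UNIV. x k * (c i j k * pdiff f x i * pdiff g x j))"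
      by (rule sum.swap)
    also have "\<dots> = Phi c x (pdiff f x) (pdiff g x)"
      unfolding Phi_def bracket_def by (simp add: sum_distrib_left)
    finally show ?thesis .
  qed
  finally show ?thesis .
qed


lemma pbracket_add_left: "pbracket c (f + g) h = pbracket c f h + pbracket c g h"
  by (simp add: pbracket_def pd_add distrib_left distrib_right sum.distrib)

lemma pbracket_add_right: "pbracket c h (f + g) = pbracket c h f + pbracket c h g"
  by (simp add: pbracket_def pd_add distrib_left distrib_right sum.distrib)

lemma pbracket_mult_left: "pbracket c (f * g) h = f * pbracket c g h + g * pbracket c f h"
  by (simp add: pbracket_def pd_mult distrib_left distrib_right sum.distrib sum_distrib_left mult_ac)

lemma pbracket_mult_right: "pbracket c h (f * g) = f * pbracket c h g + g * pbracket c h f"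
  by (simp add: pbracket_def pd_mult distrib_left distrib_right sum.distrib sum_distrib_left mult_ac)

lemma pbracket_pconst_left[simp]: "pbracket c (pconst a) h = 0"
  by (simp add: pbracket_def)

lemma pbracket_pconst_right[simp]: "pbracket c h (pconst a) = 0"
  by (simp add: pbracket_def)

lemma pbracket_zero_left[simp]: "pbracket c 0 h = 0"
  by (simp add: pbracket_def)

lemma pbracket_zero_right[simp]: "pbracket c h 0 = 0"
  by (simp add: pbracket_def)

lemma pbracket_plin: "pbracket c (plin u) (plin v) = plin (bracket c u v)"
proof -
  have "pbracket c (plin u) (plin v) = (\<Sum>i\<in>UNIV. \<Sum>j\<in>UNIV. \<Sum>k\<in>UNIV. pconst (c i j k * u i * v j) * pvar k)"
    by (simp add: pbracket_def pd_plin pconst_mult[symmetric] mult_ac)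
  also have "\<dots> = (\<Sum>i\<in>UNIV. \<Sum>k\<in>UNIV. \<Sum>j\<in>UNIV. pconst (c i j k * u i * v j) * pvar k)"
    by (rule sum.cong[OF refl], rule sum.swap)
  also have "\<dots> = (\<Sum>k\<in>UNIV. \<Sum>i\<in>UNIV. \<Sum>j\<in>UNIV. pconst (c i j k * u i * v j) * pvar k)"
    by (rule sum.swap)
  also have "\<dots> = plin (bracket c u v)"
    unfolding plin_def bracket_def by (simp add: pconst_sum sum_distrib_right)
  finally show ?thesis .
qed

lemma pbracket_antisym:
  assumes "\<And>i j k. c i j k = - c j i k"
  shows "pbracket c g f = - pbracket c f g"
proof -
  have "pbracket c g f = (\<Sum>j\<in>UNIV. \<Sum>i\<in>UNIV. \<Sum>k\<in>UNIV. pconst (c j i k) * pvar k * pderiv_var j g * pderiv_var i f)"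
    by (simp add: pbracket_def)
  also have "\<dots> = (\<Sum>i\<in>UNIV. \<Sum>j\<in>UNIV. \<Sum>k\<in>UNIV. pconst (c j i k) * pvar k * pderiv_var j g * pderiv_var i f)"
    by (rule sum.swap)
  also have "\<dots> = (\<Sum>i\<in>UNIV. \<Sum>j\<in>UNIV. \<Sum>k\<in>UNIV. - (pconst (c i j k) * pvar k * pderiv_var i f * pderiv_var j g))"
  proof (intro sum.cong refl)
    fix i j k
    have "c j i k = - c i j k" by (rule assms)
    then show "pconst (c j i k) * pvar k * pderiv_var j g * pderiv_var i f =
      - (pconst (c i j k) * pvar k * pderiv_var i f * pderiv_var j g)"
      by (simp add: pconst_uminus mult_ac)
  qed
  also have "\<dots> = - pbracket c f g"
    by (simp add: pbracket_def sum_negf)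
  finally show ?thesis .
qed


lemma sum_fun_apply: "(\<Sum>a\<in>t. f a) i = (\<Sum>a\<in>t. f a i)" for f :: "_ \<Rightarrow> _ \<Rightarrow> 'k::comm_monoid_add"
  by (induction t rule: infinite_finite_induct) auto

interpretation VS: vector_space "vscale :: 'k::field \<Rightarrow> ('n \<Rightarrow> 'k) \<Rightarrow> ('n \<Rightarrow> 'k)"
  by unfold_locales (auto simp: vscale_def fun_eq_iff algebra_simps)

lemma vscale_sum: "(\<Sum>a\<in>t. vscale (r a) a) = (\<lambda>i. \<Sum>a\<in>t. r a * a i)"
  by (simp add: fun_eq_iff sum_fun_apply vscale_def)

lemma kspan_eq: "kspan X = VS.span X"
  unfolding kspan_def VS.span_explicit by (auto simp: vscale_sum)

lemma subspace_eq: "is_subspace U = VS.subspace U"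
  unfolding is_subspace_def VS.subspace_def by auto

lemma lin_indep_iff: assumes "finite B" shows "lin_indep B \<longleftrightarrow> VS.independent B"
proof
  assume L: "lin_indep B"
  show "VS.independent B"
    unfolding VS.dependent_explicit
  proof clarify
    fix t u v assume t: "finite t" "t \<subseteq> B" "(\<Sum>v\<in>t. vscale (u v) v) = 0" "v \<in> t" "u v \<noteq> 0"
    define a where "a = (\<lambda>w. if w \<in> t then u w else 0)"
    have "(\<Sum>w\<in>B. vscale (a w) w) = (\<Sum>w\<in>t. vscale (u w) w)"
      unfolding a_def using t assms
      by (intro sum.mono_neutral_cong_right) (auto simp: vscale_def fun_eq_iff)
    then have "(\<lambda>i. \<Sum>w\<in>B. a w * w i) = 0" using t(3) by (simp add: vscale_sum)
    with L have "a v = 0" using t unfolding lin_indep_def by blast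
    then show False using t unfolding a_def by simp
  qed
next
  assume I: "VS.independent B"
  show "lin_indep B" unfolding lin_indep_def
  proof clarify
    fix a u assume "(\<lambda>i. \<Sum>u\<in>B. a u * u i) = 0" "u \<in> B"
    then show "a u = 0" using I assms unfolding VS.dependent_explicit
      by (auto simp: vscale_sum[symmetric])
  qed
qed

lemma kspan_subspace: "is_subspace (kspan X)"
  by (simp add: kspan_eq subspace_eq VS.subspace_span)

lemma kspan_superset: "X \<subseteq> kspan X"
  by (simp add: kspan_eq VS.span_superset)

lemma kspan_minimal: "X \<subseteq> U \<Longrightarrow> is_subspace U \<Longrightarrow> kspan X \<subseteq> U"
  by (simp add: kspan_eq subspace_eq VS.span_minimal)

lemma kspan_mono: "X \<subseteq> Y \<Longrightarrow> kspan X \<subseteq> kspan Y"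
  by (simp add: kspan_eq VS.span_mono)

lemma subspace_add: "is_subspace U \<Longrightarrow> u \<in> U \<Longrightarrow> v \<in> U \<Longrightarrow> u + v \<in> U"
  by (simp add: is_subspace_def)
lemma subspace_scale: "is_subspace U \<Longrightarrow> u \<in> U \<Longrightarrow> vscale a u \<in> U"
  by (simp add: is_subspace_def)
lemma subspace_zero: "is_subspace U \<Longrightarrow> 0 \<in> U"
  by (simp add: is_subspace_def)
lemma subspace_diff: "is_subspace U \<Longrightarrow> u \<in> U \<Longrightarrow> v \<in> U \<Longrightarrow> u - v \<in> U"
  by (simp add: subspace_eq VS.subspace_diff)
lemma subspace_uminus: "is_subspace U \<Longrightarrow> u \<in> U \<Longrightarrow> - u \<in> U"
  by (simp add: subspace_eq VS.subspace_neg)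
lemma subspace_sum: "is_subspace U \<Longrightarrow> (\<And>i. i \<in> I \<Longrightarrow> f i \<in> U) \<Longrightarrow> (\<Sum>i\<in>I. f i) \<in> U"
  by (simp add: subspace_eq VS.subspace_sum)

lemma vscale_simps[simp]: "vscale 1 u = u" "vscale 0 u = 0" "vscale a 0 = 0"
  by (auto simp: vscale_def fun_eq_iff)

lemma vscale_apply[simp]: "vscale a u i = a * u i"
  by (simp add: vscale_def)


locale sympl =
  fixes V :: "('n, 'k::field) vec set" and \<omega> :: "('n, 'k) vec \<Rightarrow> ('n, 'k) vec \<Rightarrow> 'k"
  assumes sub: "is_subspace V" and sy: "symplectic_on V \<omega>"
begin

lemma lin_l: "u \<in> V \<Longrightarrow> v \<in> V \<Longrightarrow> w \<in> V \<Longrightarrow> \<omega> (vscale a u + vscale b v) w = a * \<omega> u w + b * \<omega> v w"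
  using sy unfolding symplectic_on_def by blast
lemma lin_r: "u \<in> V \<Longrightarrow> v \<in> V \<Longrightarrow> w \<in> V \<Longrightarrow> \<omega> w (vscale a u + vscale b v) = a * \<omega> w u + b * \<omega> w v"
  using sy unfolding symplectic_on_def by blast
lemma alt: "u \<in> V \<Longrightarrow> \<omega> u u = 0"
  using sy unfolding symplectic_on_def by blast
lemma nondeg: "u \<in> V \<Longrightarrow> (\<And>v. v \<in> V \<Longrightarrow> \<omega> u v = 0) \<Longrightarrow> u = 0"
  using sy unfolding symplectic_on_def by blast

lemma add_l: "u \<in> V \<Longrightarrow> v \<in> V \<Longrightarrow> w \<in> V \<Longrightarrow> \<omega> (u + v) w = \<omega> u w + \<omega> v w"
  using lin_l[of u v w 1 1] by simp
lemma add_r: "u \<in> V \<Longrightarrow> v \<in> V \<Longrightarrow> w \<in> V \<Longrightarrow> \<omega> w (u + v) = \<omega> w u + \<omega> w v"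
  using lin_r[of u v w 1 1] by simp
lemma scale_l: "u \<in> V \<Longrightarrow> w \<in> V \<Longrightarrow> \<omega> (vscale a u) w = a * \<omega> u w"
  using lin_l[of u u w a 0] by simp
lemma scale_r: "u \<in> V \<Longrightarrow> w \<in> V \<Longrightarrow> \<omega> w (vscale a u) = a * \<omega> w u"
  using lin_r[of u u w a 0] by simp
lemma zero_l[simp]: "w \<in> V \<Longrightarrow> \<omega> 0 w = 0"
  using scale_l[of w w 0] by simp
lemma zero_r[simp]: "w \<in> V \<Longrightarrow> \<omega> w 0 = 0"
  using scale_r[of w w 0] by simp

lemma sum_l: "(\<And>t. t \<in> S \<Longrightarrow> f t \<in> V) \<Longrightarrow> w \<in> V \<Longrightarrow> \<omega> (\<Sum>t\<in>S. f t) w = (\<Sum>t\<in>S. \<omega> (f t) w)"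
proof (induction S rule: infinite_finite_induct)
  case (insert x F)
  have "(\<Sum>t\<in>F. f t) \<in> V" using insert by (intro subspace_sum[OF sub]) auto
  moreover have "f x \<in> V" using insert by auto
  ultimately have "\<omega> (f x + sum f F) w = \<omega> (f x) w + \<omega> (sum f F) w"
    by (intro add_l) (use insert in auto)
  moreover have "\<omega> (sum f (insert x F)) w = \<omega> (f x + sum f F) w" using insert(1,2) by (subst sum.insert) (assumption, assumption, rule refl)
  moreover have "(\<Sum>t\<in>insert x F. \<omega> (f t) w) = \<omega> (f x) w + (\<Sum>t\<in>F. \<omega> (f t) w)"
    using insert(1,2) by (rule sum.insert)
  moreover have "\<omega> (sum f F) w = (\<Sum>t\<in>F. \<omega> (f t) w)" using insert by auto
  ultimately show ?case by argo
qed auto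

lemma sum_r: "(\<And>t. t \<in> S \<Longrightarrow> f t \<in> V) \<Longrightarrow> w \<in> V \<Longrightarrow> \<omega> w (\<Sum>t\<in>S. f t) = (\<Sum>t\<in>S. \<omega> w (f t))"
proof (induction S rule: infinite_finite_induct)
  case (insert x F)
  have "(\<Sum>t\<in>F. f t) \<in> V" using insert by (intro subspace_sum[OF sub]) auto
  moreover have "f x \<in> V" using insert by auto
  ultimately have "\<omega> w (f x + sum f F) = \<omega> w (f x) + \<omega> w (sum f F)"
    by (intro add_r) (use insert in auto)
  moreover have "\<omega> w (sum f (insert x F)) = \<omega> w (f x + sum f F)" using insert(1,2) by (subst sum.insert) (assumption, assumption, rule refl)
  moreover have "(\<Sum>t\<in>insert x F. \<omega> w (f t)) = \<omega> w (f x) + (\<Sum>t\<in>F. \<omega> w (f t))"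
    using insert(1,2) by (rule sum.insert)
  moreover have "\<omega> w (sum f F) = (\<Sum>t\<in>F. \<omega> w (f t))" using insert by auto
  ultimately show ?case by argo
qed auto

lemma diff_l: "u \<in> V \<Longrightarrow> v \<in> V \<Longrightarrow> w \<in> V \<Longrightarrow> \<omega> (u - v) w = \<omega> u w - \<omega> v w"
proof -
  assume a: "u \<in> V" "v \<in> V" "w \<in> V"
  have eq: "u - v = vscale 1 u + vscale (-1) v" by (simp add: fun_eq_iff)
  show ?thesis unfolding eq using lin_l[OF a, of 1 "-1"] by simp
qed

lemma antisym: "u \<in> V \<Longrightarrow> v \<in> V \<Longrightarrow> \<omega> u v = - \<omega> v u"
proof -
  assume u: "u \<in> V" and v: "v \<in> V"
  have uv: "u + v \<in> V" using u v by (rule subspace_add[OF sub])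
  have "0 = \<omega> (u + v) (u + v)" using alt[OF uv] by simp
  also have "\<dots> = \<omega> u u + \<omega> u v + (\<omega> v u + \<omega> v v)"
    using u v uv by (simp add: add_l add_r)
  finally show ?thesis using alt[OF u] alt[OF v] by (simp add: eq_neg_iff_add_eq_0 add.commute)
qed

lemma dual_exists:
  assumes fin: "finite Bs" and ind: "lin_indep Bs" and sp: "kspan Bs = V"
  shows "\<exists>v\<in>V. \<forall>l\<in>Bs. \<omega> v l = \<phi> l"
proof -
  have indep: "VS.independent Bs" using lin_indep_iff fin ind by blast
  have spanV: "VS.span Bs = V" using sp kspan_eq by metis
  have BsV: "Bs \<subseteq> V" using VS.span_superset spanV by blast
  define T where "T v = (\<Sum>l\<in>Bs. vscale (\<omega> v l) l)" for v
  have TV: "T v \<in> V" for v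
    unfolding T_def using BsV by (intro subspace_sum[OF sub] subspace_scale[OF sub]) auto
  have coef: "a l = 0" if "(\<Sum>l\<in>Bs. vscale (a l) l) = 0" "l \<in> Bs" for a l
    using indep fin that unfolding VS.dependent_explicit by blast
  have nd: "v = 0" if v: "v \<in> V" and z: "\<forall>l\<in>Bs. \<omega> v l = 0" for v
  proof (rule nondeg[OF v])
    fix \<eta> assume "\<eta> \<in> V"
    then obtain t r where t: "finite t" "t \<subseteq> Bs" "\<eta> = (\<Sum>a\<in>t. vscale (r a) a)"
      using spanV unfolding VS.span_explicit by blast
    have "\<omega> v \<eta> = (\<Sum>a\<in>t. \<omega> v (vscale (r a) a))"
      unfolding t(3) using t BsV v by (intro sum_r) (auto intro: subspace_scale[OF sub])
    also have "\<dots> = (\<Sum>a\<in>t. r a * \<omega> v a)"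
      using t BsV v by (intro sum.cong refl scale_r) auto
    also have "\<dots> = 0"
    proof (rule sum.neutral, rule ballI)
      fix a assume "a \<in> t"
      then have "a \<in> Bs" using t(2) by blast
      then show "r a * \<omega> v a = 0" using z by simp
    qed
    finally show "\<omega> v \<eta> = 0" .
  qed
  have Tsub: "T u - T v = (\<Sum>l\<in>Bs. vscale (\<omega> (u - v) l) l)" if "u \<in> V" "v \<in> V" for u v
  proof -
    have "T u - T v = (\<Sum>l\<in>Bs. vscale (\<omega> u l) l - vscale (\<omega> v l) l)"
      unfolding T_def by (simp add: sum_subtractf)
    also have "\<dots> = (\<Sum>l\<in>Bs. vscale (\<omega> (u - v) l) l)"
      using that BsV by (intro sum.cong refl) (auto simp: diff_l fun_eq_iff algebra_simps)
    finally show ?thesis .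
  qed
  have Tinj: "u = v" if "u \<in> V" "v \<in> V" "T u = T v" for u v
  proof -
    have "(\<Sum>l\<in>Bs. vscale (\<omega> (u - v) l) l) = 0" using Tsub[OF that(1,2)] that(3) by simp
    then have "\<forall>l\<in>Bs. \<omega> (u - v) l = 0" using coef by blast
    then have "u - v = 0" using nd subspace_diff[OF sub that(1,2)] by blast
    then show ?thesis by simp
  qed
  have Tlin: "T (\<Sum>b\<in>S. vscale (r b) b) = (\<Sum>b\<in>S. vscale (r b) (T b))" if "S \<subseteq> V" for S r
  proof -
    have "T (\<Sum>b\<in>S. vscale (r b) b) = (\<Sum>l\<in>Bs. vscale (\<Sum>b\<in>S. r b * \<omega> b l) l)"
      unfolding T_def
    proof (intro sum.cong refl arg_cong2[where f=vscale])
      fix l assume l: "l \<in> Bs"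
      have "\<omega> (\<Sum>b\<in>S. vscale (r b) b) l = (\<Sum>b\<in>S. \<omega> (vscale (r b) b) l)"
        using that l BsV by (intro sum_l) (auto intro: subspace_scale[OF sub])
      also have "\<dots> = (\<Sum>b\<in>S. r b * \<omega> b l)"
        using that l BsV by (intro sum.cong refl scale_l) auto
      finally show "\<omega> (\<Sum>b\<in>S. vscale (r b) b) l = (\<Sum>b\<in>S. r b * \<omega> b l)" .
    qed
    also have "\<dots> = (\<Sum>l\<in>Bs. \<Sum>b\<in>S. vscale (r b) (vscale (\<omega> b l) l))"
      by (simp add: VS.scale_sum_left VS.scale_scale)
    also have "\<dots> = (\<Sum>b\<in>S. \<Sum>l\<in>Bs. vscale (r b) (vscale (\<omega> b l) l))"
      by (rule sum.swap)
    also have "\<dots> = (\<Sum>b\<in>S. vscale (r b) (T b))"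
      unfolding T_def by (simp add: VS.scale_sum_right)
    finally show ?thesis .
  qed
  have injT: "inj_on T Bs" using Tinj BsV by (auto simp: inj_on_def)
  have pull: "(\<Sum>v\<in>t. vscale (u v) v) = T (\<Sum>b\<in>{b\<in>Bs. T b \<in> t}. vscale (u (T b)) b)"
    if t: "t \<subseteq> T ` Bs" for t u
  proof -
    let ?s = "{b\<in>Bs. T b \<in> t}"
    have img: "T ` ?s = t" using t by auto
    have inj: "inj_on T ?s" using injT by (rule inj_on_subset) auto
    have "(\<Sum>b\<in>?s. vscale (u (T b)) (T b)) = (\<Sum>v\<in>T ` ?s. vscale (u v) v)"
      by (rule sum.reindex[OF inj, unfolded comp_def, symmetric])
    then have "(\<Sum>v\<in>t. vscale (u v) v) = (\<Sum>b\<in>?s. vscale (u (T b)) (T b))"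
      by (simp only: img)
    also have "\<dots> = T (\<Sum>b\<in>?s. vscale (u (T b)) b)"
      using BsV by (intro Tlin[symmetric]) auto
    finally show ?thesis .
  qed
  have T0: "T 0 = 0" unfolding T_def using BsV by (intro sum.neutral) auto
  have indT: "VS.independent (T ` Bs)"
  proof (rule VS.independent_if_scalars_zero)
    show "finite (T ` Bs)" using fin by simp
  next
    fix f x assume s: "(\<Sum>x\<in>T ` Bs. vscale (f x) x) = 0" and x: "x \<in> T ` Bs"
    have "(\<Sum>b\<in>Bs. vscale (f (T b)) (T b)) = (\<Sum>x\<in>T ` Bs. vscale (f x) x)"
      by (rule sum.reindex[OF injT, unfolded comp_def, symmetric])
    then have "(\<Sum>b\<in>Bs. vscale (f (T b)) (T b)) = 0" using s by simp
    then have "T (\<Sum>b\<in>Bs. vscale (f (T b)) b) = T 0" using Tlin[OF BsV] T0 by simp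
    moreover have "(\<Sum>b\<in>Bs. vscale (f (T b)) b) \<in> V"
      using BsV by (intro subspace_sum[OF sub] subspace_scale[OF sub]) auto
    ultimately have "(\<Sum>b\<in>Bs. vscale (f (T b)) b) = 0"
      using Tinj subspace_zero[OF sub] by blast
    then show "f x = 0" using coef x by auto
  qed
  have cardT: "card (T ` Bs) = card Bs" using card_image[OF injT] .
  have Vsp: "V \<subseteq> VS.span (T ` Bs)"
  proof
    fix a assume aV: "a \<in> V"
    show "a \<in> VS.span (T ` Bs)"
    proof (rule ccontr)
      assume na: "a \<notin> VS.span (T ` Bs)"
      have i2: "VS.independent (insert a (T ` Bs))" using VS.independent_insertI[OF na indT] .
      have "insert a (T ` Bs) \<subseteq> VS.span Bs" using aV TV spanV by auto
      from VS.independent_span_bound[OF fin i2 this]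
      have "card (insert a (T ` Bs)) \<le> card Bs" by simp
      moreover have "a \<notin> T ` Bs" using na VS.span_superset by blast
      ultimately show False using cardT fin by simp
    qed
  qed
  define tg where "tg = (\<Sum>l\<in>Bs. vscale (\<phi> l) l)"
  have "tg \<in> V" unfolding tg_def using BsV by (intro subspace_sum[OF sub] subspace_scale[OF sub]) auto
  then obtain t r where t: "finite t" "t \<subseteq> T ` Bs" "tg = (\<Sum>a\<in>t. vscale (r a) a)"
    using Vsp unfolding VS.span_explicit by blast
  let ?w = "\<Sum>b\<in>{b\<in>Bs. T b \<in> t}. vscale (r (T b)) b"
  have wV: "?w \<in> V" using BsV by (intro subspace_sum[OF sub] subspace_scale[OF sub]) auto
  have "T ?w = tg" using pull[OF t(2)] t(3) by simp
  moreover have "(\<Sum>l\<in>Bs. vscale (\<omega> ?w l - \<phi> l) l) = T ?w - tg"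
    unfolding T_def tg_def by (simp add: sum_subtractf[symmetric] VS.scale_left_diff_distrib)
  ultimately have "(\<Sum>l\<in>Bs. vscale (\<omega> ?w l - \<phi> l) l) = 0" by simp
  then have "\<forall>l\<in>Bs. \<omega> ?w l = \<phi> l" using coef by fastforce
  then show ?thesis using wV by blast
qed

end


lemma bracket_add_l: "bracket c (u + v) w = bracket c u w + bracket c v w"
  by (simp add: bracket_def fun_eq_iff distrib_left distrib_right sum.distrib)
lemma bracket_add_r: "bracket c w (u + v) = bracket c w u + bracket c w v"
  by (simp add: bracket_def fun_eq_iff distrib_left distrib_right sum.distrib)
lemma bracket_scale_l: "bracket c (vscale a u) w = vscale a (bracket c u w)"
  by (simp add: bracket_def fun_eq_iff sum_distrib_left mult_ac)
lemma bracket_scale_r: "bracket c w (vscale a u) = vscale a (bracket c w u)"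
  by (simp add: bracket_def fun_eq_iff sum_distrib_left mult_ac)
lemma bracket_zero_l[simp]: "bracket c 0 w = 0"
  by (simp add: bracket_def fun_eq_iff)
lemma bracket_zero_r[simp]: "bracket c w 0 = 0"
  by (simp add: bracket_def fun_eq_iff)
lemma bracket_uminus_l: "bracket c (- u) w = - bracket c u w"
  by (simp add: bracket_def fun_eq_iff sum_negf)
lemma bracket_diff_l: "bracket c (u - v) w = bracket c u w - bracket c v w"
  using bracket_add_l[of c u "-v" w] by (simp add: bracket_uminus_l)
lemma bracket_uminus_r: "bracket c w (- u) = - bracket c w u"
  by (simp add: bracket_def fun_eq_iff sum_negf)
lemma bracket_diff_r: "bracket c w (u - v) = bracket c w u - bracket c w v"
  using bracket_add_r[of c w u "-v"] by (simp add: bracket_uminus_r)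
lemma additive_sum:
  fixes F :: "'a::comm_monoid_add \<Rightarrow> 'b::comm_monoid_add"
  assumes "\<And>a b. F (a + b) = F a + F b" "F 0 = 0"
  shows "F (\<Sum>i\<in>I. f i) = (\<Sum>i\<in>I. F (f i))"
  by (induction I rule: infinite_finite_induct) (auto simp: assms)

lemma bracket_sum_l: "bracket c (\<Sum>i\<in>I. f i) w = (\<Sum>i\<in>I. bracket c (f i) w)"
  by (rule additive_sum[where F="\<lambda>v. bracket c v w"]) (auto simp: bracket_add_l)
lemma bracket_sum_r: "bracket c w (\<Sum>i\<in>I. f i) = (\<Sum>i\<in>I. bracket c w (f i))"
  by (rule additive_sum[where F="\<lambda>v. bracket c w v"]) (auto simp: bracket_add_r)

definition dlt :: "'n \<Rightarrow> ('n, 'k::field) vec" where "dlt i = (\<lambda>t. if t = i then 1 else 0)"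

lemma bracket_dlt: "bracket c (dlt i) (dlt j) k = c i j k"
proof -
  have "bracket c (dlt i) (dlt j) k = (\<Sum>a\<in>UNIV. \<Sum>b\<in>UNIV. if a = i \<and> b = j then c i j k else 0)"
    unfolding bracket_def dlt_def by (intro sum.cong refl) auto
  also have "\<dots> = (\<Sum>a\<in>UNIV. if a = i then (\<Sum>b\<in>UNIV. if b = j then c i j k else 0) else 0)"
    by (intro sum.cong refl) auto
  also have "\<dots> = c i j k" by simp
  finally show ?thesis .
qed

lemma c_antisym: assumes "is_lie_algebra c" shows "c i j k = - c j i k"
proof -
  have z: "bracket c \<xi> \<xi> = 0" for \<xi> using assms unfolding is_lie_algebra_def by blast
  have "0 = bracket c (dlt i + dlt j) (dlt i + dlt j) k" using z by simp
  also have "\<dots> = bracket c (dlt i) (dlt i) k + bracket c (dlt i) (dlt j) k + bracket c (dlt j) (dlt i) k + bracket c (dlt j) (dlt j) k"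
    by (simp add: bracket_add_l bracket_add_r)
  also have "\<dots> = c i j k + c j i k" using z by (simp add: bracket_dlt[symmetric])
  finally show ?thesis by (simp add: eq_neg_iff_add_eq_0)
qed

lemma bracket_antisym: assumes "is_lie_algebra c" shows "bracket c v u = - bracket c u v"
proof -
  have "bracket c v u = (\<lambda>k. \<Sum>j\<in>UNIV. \<Sum>i\<in>UNIV. c j i k * v j * u i)" by (simp add: bracket_def)
  also have "\<dots> = (\<lambda>k. \<Sum>i\<in>UNIV. \<Sum>j\<in>UNIV. c j i k * v j * u i)" by (subst sum.swap) rule
  also have "\<dots> = (\<lambda>k. \<Sum>i\<in>UNIV. \<Sum>j\<in>UNIV. - (c i j k * u i * v j))"
  proof (intro ext sum.cong refl)
    fix k i j
    have "c j i k = - c i j k" by (rule c_antisym[OF assms])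
    then show "c j i k * v j * u i = - (c i j k * u i * v j)" by (simp add: mult_ac)
  qed
  also have "\<dots> = - bracket c u v"
    by (simp add: bracket_def fun_eq_iff sum_negf)
  finally show ?thesis .
qed

lemma bracket_self: assumes "is_lie_algebra c" shows "bracket c u u = 0"
  using assms unfolding is_lie_algebra_def by blast

lemma jacobi: assumes "is_lie_algebra c"
  shows "bracket c (bracket c a b) d + bracket c (bracket c b d) a + bracket c (bracket c d a) b = 0"
  using assms unfolding is_lie_algebra_def by blast

lemma Phi_add_l: "Phi c x (u + v) w = Phi c x u w + Phi c x v w"
  by (simp add: Phi_def bracket_add_l distrib_left sum.distrib)
lemma Phi_add_r: "Phi c x w (u + v) = Phi c x w u + Phi c x w v"
  by (simp add: Phi_def bracket_add_r distrib_left sum.distrib)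
lemma Phi_scale_l: "Phi c x (vscale a u) w = a * Phi c x u w"
  by (simp add: Phi_def bracket_scale_l sum_distrib_left mult_ac)
lemma Phi_scale_r: "Phi c x w (vscale a u) = a * Phi c x w u"
  by (simp add: Phi_def bracket_scale_r sum_distrib_left mult_ac)
lemma Phi_diff_l: "Phi c x (u - v) w = Phi c x u w - Phi c x v w"
  by (simp add: Phi_def bracket_diff_l sum_subtractf algebra_simps)
lemma Phi_diff_r: "Phi c x w (u - v) = Phi c x w u - Phi c x w v"
  by (simp add: Phi_def bracket_diff_r sum_subtractf algebra_simps)
lemma Phi_zero_l[simp]: "Phi c x 0 w = 0" by (simp add: Phi_def)
lemma Phi_zero_r[simp]: "Phi c x w 0 = 0" by (simp add: Phi_def)
lemma Phi_antisym: "is_lie_algebra c \<Longrightarrow> Phi c x v u = - Phi c x u v"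
  by (simp add: Phi_def bracket_antisym[of c v u] sum_negf)
lemma Phi_self: "is_lie_algebra c \<Longrightarrow> Phi c x u u = 0"
  by (simp add: Phi_def bracket_self)

lemma subspace_Phi_l: "is_subspace {y. Phi c x y \<eta> = 0}"
  by (simp add: is_subspace_def Phi_add_l Phi_scale_l)
lemma subspace_Phi_r: "is_subspace {y. Phi c x \<eta> y = 0}"
  by (simp add: is_subspace_def Phi_add_r Phi_scale_r)

lemma kspan_Phi_l: "(\<And>g. g \<in> G \<Longrightarrow> Phi c x g \<eta> = 0) \<Longrightarrow> y \<in> kspan G \<Longrightarrow> Phi c x y \<eta> = 0"
  using kspan_minimal[of G "{y. Phi c x y \<eta> = 0}", OF _ subspace_Phi_l] by blast
lemma kspan_Phi_r: "(\<And>g. g \<in> G \<Longrightarrow> Phi c x \<eta> g = 0) \<Longrightarrow> y \<in> kspan G \<Longrightarrow> Phi c x \<eta> y = 0"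
  using kspan_minimal[of G "{y. Phi c x \<eta> y = 0}", OF _ subspace_Phi_r] by blast

lemma kspan_isotropic:
  assumes "\<And>g h. g \<in> G \<Longrightarrow> h \<in> G \<Longrightarrow> Phi c x g h = 0"
  shows "isotropic c x (kspan G)"
  unfolding isotropic_def
proof (intro ballI)
  fix u v assume u: "u \<in> kspan G" and v: "v \<in> kspan G"
  have "Phi c x g v = 0" if g: "g \<in> G" for g
    using kspan_Phi_r[of G c x g v] assms g v by blast
  then show "Phi c x u v = 0" using kspan_Phi_l[of G c x v u] u by blast
qed


lemma pdiff_mult': "pdiff (f * g) x = vscale (peval f x) (pdiff g x) + vscale (peval g x) (pdiff f x)"
  for x :: "('n::finite, 'k::field) vec"
  by (simp add: pdiff_mult fun_eq_iff)

lemma alg_gen_pdiff: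
  fixes x :: "('n::finite, 'k::field) vec"
  assumes W: "is_subspace W" and G: "\<And>g. g \<in> G \<Longrightarrow> pdiff g x \<in> W" and f: "f \<in> alg_gen G"
  shows "pdiff f x \<in> W"
  using f
proof induction
  case (const a) then show ?case using subspace_zero[OF W] by (simp only: pdiff_pconst)
next
  case (gen f) then show ?case using G by blast
next
  case (add f g)
  then have "pdiff f x \<in> W" "pdiff g x \<in> W" by auto
  then show ?case unfolding pdiff_add by (rule subspace_add[OF W])
next
  case (mult f g)
  then have "pdiff f x \<in> W" "pdiff g x \<in> W" by auto
  then show ?case
    unfolding pdiff_mult' by (intro subspace_add[OF W] subspace_scale[OF W])
qed

lemma alg_gen_bracket_r:
  assumes G: "\<And>g. g \<in> G \<Longrightarrow> pbracket c f g = 0" and h: "h \<in> alg_gen G"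
  shows "pbracket c f h = 0"
  using h by induction (auto simp: G pbracket_add_right pbracket_mult_right)

lemma alg_gen_bracket_l:
  assumes G: "\<And>g. g \<in> G \<Longrightarrow> pbracket c g f = 0" and h: "h \<in> alg_gen G"
  shows "pbracket c h f = 0"
  using h by induction (auto simp: G pbracket_add_left pbracket_mult_left)

lemma alg_gen_comm:
  assumes G: "\<And>f g. f \<in> G \<Longrightarrow> g \<in> G \<Longrightarrow> pbracket c f g = 0"
  shows "poisson_commutative c (alg_gen G)"
  unfolding poisson_commutative_def
proof (intro ballI)
  fix f h assume f: "f \<in> alg_gen G" and h: "h \<in> alg_gen G"
  have "pbracket c g h = 0" if "g \<in> G" for g
    using alg_gen_bracket_r[of G c g h] G that h by blast
  then show "pbracket c f h = 0" using alg_gen_bracket_l[of G c h f] f by blast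
qed

lemma poisson_gen_sub:
  assumes "poisson_commutative c (alg_gen G)"
  shows "poisson_gen c G \<subseteq> alg_gen G"
proof
  fix f assume "f \<in> poisson_gen c G"
  then show "f \<in> alg_gen G"
  proof induction
    case (br f g)
    then have "pbracket c f g = 0" using assms unfolding poisson_commutative_def by blast
    then show ?case using alg_gen.const[of 0 G] by simp
  qed (auto intro: alg_gen.intros)
qed

lemma dspan_alg_gen:
  fixes x :: "('n::finite, 'k::field) vec"
  shows "dspan (alg_gen G) x \<subseteq> kspan ((\<lambda>f. pdiff f x) ` G)"
  unfolding dspan_def
proof (rule kspan_minimal[OF _ kspan_subspace], rule subsetI)
  fix v assume "v \<in> (\<lambda>f. pdiff f x) ` alg_gen G"
  then obtain f where f: "f \<in> alg_gen G" "v = pdiff f x" by blast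
  show "v \<in> kspan ((\<lambda>f. pdiff f x) ` G)" unfolding f(2)
    by (rule alg_gen_pdiff[OF kspan_subspace _ f(1)]) (rule kspan_superset[THEN subsetD], blast)
qed

lemma dspan_mono: "F \<subseteq> F' \<Longrightarrow> dspan F x \<subseteq> dspan F' x"
  unfolding dspan_def by (intro kspan_mono image_mono)

lemma pdiff_in_dspan: "f \<in> F \<Longrightarrow> pdiff f x \<in> dspan F x"
  unfolding dspan_def by (rule kspan_superset[THEN subsetD]) (rule imageI)

lemma dspan_subspace: "is_subspace (dspan F x)"
  unfolding dspan_def by (rule kspan_subspace)


definition push :: "('n \<Rightarrow> nat) \<Rightarrow> ('n \<Rightarrow>\<^sub>0 nat) \<Rightarrow> (nat \<Rightarrow>\<^sub>0 nat)" where
  "push g m = Abs_poly_mapping (\<lambda>j. if j \<in> range g then Poly_Mapping.lookup m (inv g j) else 0)"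

lemma lookup_push:
  fixes g :: "'n::finite \<Rightarrow> nat"
  shows "Poly_Mapping.lookup (push g m) j = (if j \<in> range g then Poly_Mapping.lookup m (inv g j) else 0)"
proof -
  have "finite {j. (if j \<in> range g then Poly_Mapping.lookup m (inv g j) else 0) \<noteq> 0}"
    by (rule finite_subset[of _ "range g"]) auto
  then show ?thesis unfolding push_def by simp
qed

lemma push_add: "push g (m + n) = push g m + push g n" for g :: "'n::finite \<Rightarrow> nat"
  by (rule poly_mapping_eqI) (simp add: lookup_push lookup_add)

lemma push_inj: fixes g :: "'n::finite \<Rightarrow> nat" assumes "inj g" "push g m = push g n" shows "m = n"
proof (rule poly_mapping_eqI)
  fix i
  have "Poly_Mapping.lookup (push g m) (g i) = Poly_Mapping.lookup (push g n) (g i)" using assms by simp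
  then show "Poly_Mapping.lookup m i = Poly_Mapping.lookup n i"
    using assms(1) by (simp add: lookup_push)
qed

definition Push :: "('n \<Rightarrow> nat) \<Rightarrow> (('n \<Rightarrow>\<^sub>0 nat) \<Rightarrow>\<^sub>0 'k::zero) \<Rightarrow> ((nat \<Rightarrow>\<^sub>0 nat) \<Rightarrow>\<^sub>0 'k)" where
  "Push g p = Abs_poly_mapping (\<lambda>M. if M \<in> range (push g) then Poly_Mapping.lookup p (inv (push g) M) else 0)"

lemma lookup_Push:
  fixes g :: "'n::finite \<Rightarrow> nat" and p :: "('n \<Rightarrow>\<^sub>0 nat) \<Rightarrow>\<^sub>0 'k::zero"
  assumes "inj g"
  shows "Poly_Mapping.lookup (Push g p) M = (if M \<in> range (push g) then Poly_Mapping.lookup p (inv (push g) M) else 0)"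
proof -
  have "{M. (if M \<in> range (push g) then Poly_Mapping.lookup p (inv (push g) M) else 0) \<noteq> 0}
      \<subseteq> push g ` Poly_Mapping.keys p"
  proof
    fix M assume "M \<in> {M. (if M \<in> range (push g) then Poly_Mapping.lookup p (inv (push g) M) else 0) \<noteq> 0}"
    then obtain m where "M = push g m" "Poly_Mapping.lookup p (inv (push g) M) \<noteq> 0" by (auto split: if_splits)
    moreover have "inv (push g) M = m"
      using push_inj[OF assms] \<open>M = push g m\<close> by (metis injI inv_f_f)
    ultimately show "M \<in> push g ` Poly_Mapping.keys p" by (auto simp: in_keys_iff)
  qed
  then have "finite {M. (if M \<in> range (push g) then Poly_Mapping.lookup p (inv (push g) M) else 0) \<noteq> 0}"
    by (rule finite_subset) simp
  then show ?thesis unfolding Push_def by simp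
qed

lemma lookup_Push_push:
  fixes g :: "'n::finite \<Rightarrow> nat" and p :: "('n \<Rightarrow>\<^sub>0 nat) \<Rightarrow>\<^sub>0 'k::zero"
  assumes "inj g"
  shows "Poly_Mapping.lookup (Push g p) (push g m) = Poly_Mapping.lookup p m"
proof -
  have "inj (push g)" using push_inj[OF assms] by (metis injI)
  then show ?thesis by (simp add: lookup_Push[OF assms])
qed

lemma Push_add: "inj g \<Longrightarrow> Push g (p + q) = Push g p + Push g q" for g :: "'n::finite \<Rightarrow> nat"
  and p q :: "('n \<Rightarrow>\<^sub>0 nat) \<Rightarrow>\<^sub>0 'k::comm_monoid_add"
  by (rule poly_mapping_eqI) (simp add: lookup_Push lookup_add)

lemma Push_zero: "inj g \<Longrightarrow> Push g 0 = (0 :: (nat \<Rightarrow>\<^sub>0 nat) \<Rightarrow>\<^sub>0 'k::zero)" for g :: "'n::finite \<Rightarrow> nat"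
  by (rule poly_mapping_eqI) (simp add: lookup_Push)

lemma Push_single: "inj g \<Longrightarrow> Push g (Poly_Mapping.single m a) = Poly_Mapping.single (push g m) (a::'k::zero)"
  for g :: "'n::finite \<Rightarrow> nat"
proof (rule poly_mapping_eqI)
  fix M assume g: "inj g"
  have ip: "inj (push g)" using push_inj[OF g] by (metis injI)
  show "Poly_Mapping.lookup (Push g (Poly_Mapping.single m a)) M = Poly_Mapping.lookup (Poly_Mapping.single (push g m) a) M"
  proof (cases "M \<in> range (push g)")
    case True
    then obtain m' where M: "M = push g m'" by blast
    have "Poly_Mapping.lookup (Push g (Poly_Mapping.single m a)) M = Poly_Mapping.lookup (Poly_Mapping.single m a) m'"
      unfolding M by (rule lookup_Push_push[OF g])
    also have "\<dots> = Poly_Mapping.lookup (Poly_Mapping.single (push g m) a) M"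
      unfolding M using ip by (auto simp: lookup_single when_def dest: injD)
    finally show ?thesis .
  next
    case False
    then have "M \<noteq> push g m" by blast
    then show ?thesis using False by (simp add: lookup_Push[OF g] lookup_single when_def)
  qed
qed

lemma Push_sum: "inj g \<Longrightarrow> Push g (\<Sum>i\<in>I. f i) = (\<Sum>i\<in>I. Push g (f i :: ('n \<Rightarrow>\<^sub>0 nat) \<Rightarrow>\<^sub>0 'k::comm_monoid_add))"
  for g :: "'n::finite \<Rightarrow> nat"
  by (rule additive_sum) (auto simp: Push_add Push_zero)

lemma Push_mult:
  fixes g :: "'n::finite \<Rightarrow> nat" and p q :: "('n \<Rightarrow>\<^sub>0 nat) \<Rightarrow>\<^sub>0 'k::field"
  assumes g: "inj g"
  shows "Push g (p * q) = Push g p * Push g q"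
proof -
  have "Push g (p * q) = (\<Sum>m\<in>Poly_Mapping.keys p. \<Sum>n\<in>Poly_Mapping.keys q.
      Poly_Mapping.single (push g m) (Poly_Mapping.lookup p m) * Poly_Mapping.single (push g n) (Poly_Mapping.lookup q n))"
    by (subst poly_mult_expand) (simp add: Push_sum[OF g] mult_single Push_single[OF g] push_add)
  also have "\<dots> = (\<Sum>m\<in>Poly_Mapping.keys p. Poly_Mapping.single (push g m) (Poly_Mapping.lookup p m)) *
      (\<Sum>n\<in>Poly_Mapping.keys q. Poly_Mapping.single (push g n) (Poly_Mapping.lookup q n))"
    by (simp add: sum_product)
  also have "\<dots> = Push g (\<Sum>m\<in>Poly_Mapping.keys p. Poly_Mapping.single m (Poly_Mapping.lookup p m)) *
      Push g (\<Sum>n\<in>Poly_Mapping.keys q. Poly_Mapping.single n (Poly_Mapping.lookup q n))"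
    by (simp add: Push_sum[OF g] Push_single[OF g])
  also have "\<dots> = Push g p * Push g q"
    by (simp only: poly_expand[symmetric])
  finally show ?thesis .
qed

lemma Push_eq_0: "inj g \<Longrightarrow> Push g p = 0 \<Longrightarrow> p = (0 :: ('n \<Rightarrow>\<^sub>0 nat) \<Rightarrow>\<^sub>0 'k::zero)"
  for g :: "'n::finite \<Rightarrow> nat"
  by (rule poly_mapping_eqI) (metis lookup_Push_push lookup_zero)

lemma poly_mult_nonzero:
  fixes p q :: "('n::finite, 'k::field) poly"
  assumes "p \<noteq> 0" "q \<noteq> 0" shows "p * q \<noteq> 0"
proof -
  obtain g :: "'n \<Rightarrow> nat" and n where "g ` UNIV = {i. i < n}" "inj_on g UNIV"
    using finite_imp_inj_to_nat_seg[of "UNIV :: 'n set"] by auto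
  then have g: "inj g" by simp
  have "Push g p \<noteq> 0" "Push g q \<noteq> 0" using assms Push_eq_0[OF g] by blast+
  then have "Push g p * Push g q \<noteq> 0" by simp
  then have "Push g (p * q) \<noteq> 0" by (simp add: Push_mult[OF g])
  then show ?thesis using Push_zero[OF g] by auto
qed

lemma generically_and:
  fixes P Q :: "('n::finite, 'k::field) vec \<Rightarrow> bool"
  assumes "generically P" "generically Q"
  shows "generically (\<lambda>x. P x \<and> Q x)"
proof -
  obtain p :: "('n, 'k) poly" where p: "p \<noteq> 0" "\<And>x. peval p x \<noteq> 0 \<Longrightarrow> P x"
    using assms(1) unfolding generically_def by blast
  obtain q :: "('n, 'k) poly" where q: "q \<noteq> 0" "\<And>x. peval q x \<noteq> 0 \<Longrightarrow> Q x"
    using assms(2) unfolding generically_def by blast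
  show ?thesis unfolding generically_def
    by (rule exI[of _ "p * q"]) (use p q poly_mult_nonzero in \<open>auto simp: peval_mult\<close>)
qed

lemma generically_plin:
  fixes e :: "('n::finite, 'k::field) vec"
  assumes "e \<noteq> 0"
  shows "generically (\<lambda>x. peval (plin e) x \<noteq> 0)"
  unfolding generically_def using assms plin_eq_0 by blast


locale sympl_basis = sympl +
  fixes Bs
  assumes fin: "finite Bs" and ind: "lin_indep Bs" and sp: "kspan Bs = V"
begin

lemma BsV: "Bs \<subseteq> V" using sp kspan_superset by blast

lemma expand: assumes "\<eta> \<in> V" shows "\<exists>r. \<eta> = (\<Sum>l\<in>Bs. vscale (r l) l)"
proof -
  obtain t r where t: "finite t" "t \<subseteq> Bs" "\<eta> = (\<Sum>a\<in>t. vscale (r a) a)"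
    using assms sp unfolding kspan_eq VS.span_explicit by blast
  have "(\<Sum>a\<in>t. vscale (r a) a) = (\<Sum>l\<in>Bs. vscale (if l \<in> t then r l else 0) l)"
    using t fin by (intro sum.mono_neutral_cong_left) auto
  then show ?thesis using t(3) by (intro exI[where x="\<lambda>l. if l \<in> t then r l else 0"]) (rule trans)
qed

lemma sum_scale_V: "(\<Sum>l\<in>S. vscale (r l) (f l)) \<in> V" if "\<And>l. l \<in> S \<Longrightarrow> f l \<in> V"
  using that by (intro subspace_sum[OF sub] subspace_scale[OF sub]) auto

lemma om_expand_r: assumes "u \<in> V" shows "\<omega> u (\<Sum>l\<in>Bs. vscale (r l) l) = (\<Sum>l\<in>Bs. r l * \<omega> u l)"
proof -
  have "\<omega> u (\<Sum>l\<in>Bs. vscale (r l) l) = (\<Sum>l\<in>Bs. \<omega> u (vscale (r l) l))"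
    using assms BsV by (intro sum_r) (auto intro: subspace_scale[OF sub])
  also have "\<dots> = (\<Sum>l\<in>Bs. r l * \<omega> u l)"
    using assms BsV by (intro sum.cong refl scale_r) auto
  finally show ?thesis .
qed

lemma om_expand_l: assumes "u \<in> V" shows "\<omega> (\<Sum>l\<in>Bs. vscale (r l) l) u = (\<Sum>l\<in>Bs. r l * \<omega> l u)"
proof -
  have "\<omega> (\<Sum>l\<in>Bs. vscale (r l) l) u = (\<Sum>l\<in>Bs. \<omega> (vscale (r l) l) u)"
    using assms BsV by (intro sum_l) (auto intro: subspace_scale[OF sub])
  also have "\<dots> = (\<Sum>l\<in>Bs. r l * \<omega> l u)"
    using assms BsV by (intro sum.cong refl scale_l) auto
  finally show ?thesis .
qed

lemma nd_basis: assumes v: "v \<in> V" and z: "\<And>l. l \<in> Bs \<Longrightarrow> \<omega> v l = 0" shows "v = 0"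
proof (rule nondeg[OF v])
  fix \<eta> assume "\<eta> \<in> V"
  then obtain r where r: "\<eta> = (\<Sum>l\<in>Bs. vscale (r l) l)" using expand by blast
  show "\<omega> v \<eta> = 0" unfolding r om_expand_r[OF v] using z by simp
qed

lemma riesz:
  assumes add: "\<And>u v. u \<in> V \<Longrightarrow> v \<in> V \<Longrightarrow> \<psi> (u + v) = \<psi> u + \<psi> v"
    and hom: "\<And>a u. u \<in> V \<Longrightarrow> \<psi> (vscale a u) = a * \<psi> u"
  shows "\<exists>v\<in>V. \<forall>\<eta>\<in>V. \<omega> v \<eta> = \<psi> \<eta>"
proof -
  obtain v where v: "v \<in> V" "\<forall>l\<in>Bs. \<omega> v l = \<psi> l"
    using dual_exists[OF fin ind sp, of \<psi>] by blast
  have psum: "\<psi> (\<Sum>l\<in>S. vscale (r l) l) = (\<Sum>l\<in>S. r l * \<psi> l)" if "S \<subseteq> Bs" for S r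
    using that
  proof (induction S rule: infinite_finite_induct)
    case (infinite A)
    then show ?case using fin finite_subset by blast
  next
    case empty
    have "\<psi> 0 = \<psi> (vscale 0 0)" by simp
    also have "\<dots> = 0" using hom[of 0 0] subspace_zero[OF sub] by simp
    finally show ?case unfolding sum.empty .
  next
    case (insert x F)
    have xV: "x \<in> V" using insert BsV by auto
    have FV: "(\<Sum>l\<in>F. vscale (r l) l) \<in> V" using insert BsV by (intro sum_scale_V) auto
    have "(\<Sum>l\<in>insert x F. vscale (r l) l) = vscale (r x) x + (\<Sum>l\<in>F. vscale (r l) l)"
      using insert(1,2) by (rule sum.insert)
    moreover have "\<psi> (vscale (r x) x + (\<Sum>l\<in>F. vscale (r l) l)) = r x * \<psi> x + \<psi> (\<Sum>l\<in>F. vscale (r l) l)"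
      using add[OF subspace_scale[OF sub xV] FV] hom[OF xV] by simp
    moreover have "(\<Sum>l\<in>insert x F. r l * \<psi> l) = r x * \<psi> x + (\<Sum>l\<in>F. r l * \<psi> l)"
      using insert(1,2) by (rule sum.insert)
    moreover have "F \<subseteq> Bs" using insert.prems by auto
    then have "\<psi> (\<Sum>l\<in>F. vscale (r l) l) = (\<Sum>l\<in>F. r l * \<psi> l)" by (rule insert.IH)
    ultimately show ?case by argo
  qed
  show ?thesis
  proof (intro bexI[OF _ v(1)] ballI)
    fix \<eta> assume "\<eta> \<in> V"
    then obtain r where r: "\<eta> = (\<Sum>l\<in>Bs. vscale (r l) l)" using expand by blast
    show "\<omega> v \<eta> = \<psi> \<eta>" unfolding r om_expand_r[OF v(1)] psum[OF order_refl] using v(2) by simp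
  qed
qed

definition bd :: "('a, 'b) vec \<Rightarrow> ('a, 'b) vec" where
  "bd k = (SOME v. v \<in> V \<and> (\<forall>l\<in>Bs. \<omega> v l = (if k = l then 1 else 0)))"

lemma bd: "bd k \<in> V" "l \<in> Bs \<Longrightarrow> \<omega> (bd k) l = (if k = l then 1 else 0)"
proof -
  have "\<exists>v. v \<in> V \<and> (\<forall>l\<in>Bs. \<omega> v l = (if k = l then 1 else 0))"
    using dual_exists[OF fin ind sp, of "\<lambda>l. if k = l then 1 else 0"] by blast
  from someI_ex[OF this] show "bd k \<in> V" "l \<in> Bs \<Longrightarrow> \<omega> (bd k) l = (if k = l then 1 else 0)"
    unfolding bd_def by blast+
qed

lemma coord: assumes "\<eta> \<in> V" shows "\<eta> = (\<Sum>k\<in>Bs. vscale (\<omega> (bd k) \<eta>) k)"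
proof -
  obtain r where r: "\<eta> = (\<Sum>l\<in>Bs. vscale (r l) l)" using expand assms by blast
  have "\<omega> (bd k) \<eta> = r k" if "k \<in> Bs" for k
  proof -
    have "\<omega> (bd k) \<eta> = (\<Sum>l\<in>Bs. r l * (if k = l then 1 else 0))"
      unfolding r om_expand_r[OF bd(1)] using bd(2) by simp
    also have "\<dots> = (\<Sum>l\<in>Bs. if l = k then r k else 0)" by (intro sum.cong) auto
    also have "\<dots> = r k" using that fin by simp
    finally show ?thesis .
  qed
  then have "(\<Sum>k\<in>Bs. vscale (\<omega> (bd k) \<eta>) k) = (\<Sum>k\<in>Bs. vscale (r k) k)" by (intro sum.cong) auto
  then show ?thesis using r by simp
qed

lemma recon: assumes u: "u \<in> V" shows "(\<Sum>k\<in>Bs. vscale (\<omega> u k) (bd k)) = u"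
proof -
  let ?s = "\<Sum>k\<in>Bs. vscale (\<omega> u k) (bd k)"
  have sV: "?s \<in> V" by (intro sum_scale_V bd(1))
  have "\<omega> ?s l = \<omega> u l" if l: "l \<in> Bs" for l
  proof -
    have lV: "l \<in> V" using l BsV by auto
    have "\<omega> ?s l = (\<Sum>k\<in>Bs. \<omega> (vscale (\<omega> u k) (bd k)) l)"
      using lV by (intro sum_l) (auto intro: subspace_scale[OF sub] bd(1))
    also have "\<dots> = (\<Sum>k\<in>Bs. \<omega> u k * (if k = l then 1 else 0))"
      using lV l by (intro sum.cong refl) (simp add: scale_l bd)
    also have "\<dots> = (\<Sum>k\<in>Bs. if k = l then \<omega> u l else 0)" by (intro sum.cong) auto
    also have "\<dots> = \<omega> u l" using l fin by simp
    finally show ?thesis .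
  qed
  then have "\<omega> (?s - u) l = 0" if "l \<in> Bs" for l
    using that BsV sV u by (simp add: diff_l subset_iff)
  then have "?s - u = 0" using nd_basis subspace_diff[OF sub sV u] by blast
  then show ?thesis by simp
qed

end


lemma lin_sum_vec:
  assumes U: "is_subspace U"
    and add: "\<And>u v. u \<in> U \<Longrightarrow> v \<in> U \<Longrightarrow> F (u + v) = F u + F v"
    and hom: "\<And>a u. u \<in> U \<Longrightarrow> F (vscale a u) = vscale a (F u)"
    and y: "\<And>i. i \<in> S \<Longrightarrow> y i \<in> U"
  shows "F (\<Sum>i\<in>S. vscale (r i) (y i)) = (\<Sum>i\<in>S. vscale (r i) (F (y i)))"
  using y
proof (induction S rule: infinite_finite_induct)
  case (infinite A)
  have "F 0 = F (vscale 0 0)" by simp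
  also have "\<dots> = 0" using hom[of 0 0] subspace_zero[OF U] by simp
  finally show ?case by (simp only: sum.infinite[OF infinite(1)])
next
  case empty
  have "F 0 = F (vscale 0 0)" by simp
  also have "\<dots> = 0" using hom[of 0 0] subspace_zero[OF U] by simp
  finally show ?case unfolding sum.empty .
next
  case (insert x G)
  have xU: "y x \<in> U" using insert by auto
  have GU: "(\<Sum>i\<in>G. vscale (r i) (y i)) \<in> U" using insert
    by (intro subspace_sum[OF U] subspace_scale[OF U]) auto
  have "(\<Sum>i\<in>insert x G. vscale (r i) (y i)) = vscale (r x) (y x) + (\<Sum>i\<in>G. vscale (r i) (y i))"
    using insert(1,2) by (rule sum.insert)
  moreover have "F (vscale (r x) (y x) + (\<Sum>i\<in>G. vscale (r i) (y i))) = vscale (r x) (F (y x)) + F (\<Sum>i\<in>G. vscale (r i) (y i))"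
    using add[OF subspace_scale[OF U xU] GU] hom[OF xU] by simp
  moreover have "(\<Sum>i\<in>insert x G. vscale (r i) (F (y i))) = vscale (r x) (F (y x)) + (\<Sum>i\<in>G. vscale (r i) (F (y i)))"
    using insert(1,2) by (rule sum.insert)
  moreover have "\<And>i. i \<in> G \<Longrightarrow> y i \<in> U" using insert.prems by auto
  then have "F (\<Sum>i\<in>G. vscale (r i) (y i)) = (\<Sum>i\<in>G. vscale (r i) (F (y i)))" by (rule insert.IH)
  ultimately show ?case by argo
qed

locale heis = sympl_basis V \<omega> Bs
  for V :: "('n::finite, 'k::field_char_0) vec set" and \<omega> Bs +
  fixes c :: "'n \<Rightarrow> 'n \<Rightarrow> 'n \<Rightarrow> 'k" and h e
  assumes lie: "is_lie_algebra c"
    and hsub: "is_subspace h" and hideal: "\<And>\<xi> \<eta>. \<xi> \<in> h \<Longrightarrow> bracket c \<xi> \<eta> \<in> h"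
    and e0: "e \<noteq> 0" and eV: "e \<notin> V"
    and hdef: "h = {v + vscale a e | v a. v \<in> V}"
    and brV: "\<And>\<xi>1 \<xi>2. \<xi>1 \<in> V \<Longrightarrow> \<xi>2 \<in> V \<Longrightarrow> bracket c \<xi>1 \<xi>2 = vscale (\<omega> \<xi>1 \<xi>2) e"
    and ecent: "\<And>y. bracket c e y = 0"
begin

lemma ecent': "bracket c y e = 0"
  using bracket_antisym[OF lie, of y e] ecent by simp

lemma e_h: "e \<in> h"
proof -
  have "e = 0 + vscale 1 e" by simp
  then show ?thesis unfolding hdef using subspace_zero[OF sub] by blast
qed

lemma V_h: "v \<in> V \<Longrightarrow> v \<in> h"
proof -
  assume v: "v \<in> V"
  have "v = v + vscale 0 e" by simp
  then show ?thesis unfolding hdef using v by blast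
qed

lemma hdecomp: "y \<in> h \<Longrightarrow> \<exists>v a. v \<in> V \<and> y = v + vscale a e"
  unfolding hdef by blast

lemma decomp_unique:
  assumes "v \<in> V" "v' \<in> V" "v + vscale a e = v' + vscale a' e"
  shows "v = v' \<and> a = a'"
proof (cases "a = a'")
  case True then show ?thesis using assms by simp
next
  case False
  have "v - v' = vscale (a' - a) e" using assms(3) by (simp add: fun_eq_iff algebra_simps)
  then have "e = vscale (1 / (a' - a)) (v - v')" using False by (simp add: fun_eq_iff)
  then have "e \<in> V" using subspace_scale[OF sub subspace_diff[OF sub assms(1,2)]] by simp
  then show ?thesis using eV by simp
qed

definition Dv :: "('n, 'k) vec \<Rightarrow> ('n, 'k) vec" where
  "Dv y = fst (SOME p. fst p \<in> V \<and> y = fst p + vscale (snd p) e)"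
definition La :: "('n, 'k) vec \<Rightarrow> 'k" where
  "La y = snd (SOME p. fst p \<in> V \<and> y = fst p + vscale (snd p) e)"

lemma DvLa: assumes "y \<in> h" shows "Dv y \<in> V" "y = Dv y + vscale (La y) e"
proof -
  obtain v a where "v \<in> V" "y = v + vscale a e" using hdecomp[OF assms] by blast
  then have "\<exists>p. fst p \<in> V \<and> y = fst p + vscale (snd p) e" by (intro exI[of _ "(v, a)"]) simp
  from someI_ex[OF this] show "Dv y \<in> V" "y = Dv y + vscale (La y) e" unfolding Dv_def La_def by blast+
qed

lemma DvLa_eq: assumes "v \<in> V" shows "Dv (v + vscale a e) = v" "La (v + vscale a e) = a"
proof -
  have h: "v + vscale a e \<in> h" unfolding hdef using assms by blast
  from decomp_unique[OF DvLa(1)[OF h] assms DvLa(2)[OF h, symmetric]]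
  show "Dv (v + vscale a e) = v" "La (v + vscale a e) = a" by auto
qed

lemma DvLa_add: assumes "y \<in> h" "z \<in> h"
  shows "Dv (y + z) = Dv y + Dv z" "La (y + z) = La y + La z"
proof -
  have eq: "y + z = (Dv y + Dv z) + vscale (La y + La z) e"
    using DvLa(2)[OF assms(1)] DvLa(2)[OF assms(2)] by (simp add: fun_eq_iff algebra_simps)
  have V: "Dv y + Dv z \<in> V" using DvLa(1)[OF assms(1)] DvLa(1)[OF assms(2)] by (rule subspace_add[OF sub])
  show "Dv (y + z) = Dv y + Dv z" "La (y + z) = La y + La z"
    unfolding eq using DvLa_eq[OF V] by auto
qed

lemma DvLa_scale: assumes "y \<in> h"
  shows "Dv (vscale t y) = vscale t (Dv y)" "La (vscale t y) = t * La y"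
proof -
  have eq: "vscale t y = vscale t (Dv y) + vscale (t * La y) e"
    using DvLa(2)[OF assms] by (metis (no_types, lifting) VS.scale_right_distrib VS.scale_scale)
  have V: "vscale t (Dv y) \<in> V" using DvLa(1)[OF assms] by (rule subspace_scale[OF sub])
  show "Dv (vscale t y) = vscale t (Dv y)" "La (vscale t y) = t * La y"
    unfolding eq using DvLa_eq[OF V] by auto
qed

lemma br_h: "\<eta> \<in> h \<Longrightarrow> bracket c \<xi> \<eta> \<in> h"
  using hideal[of \<eta> \<xi>] bracket_antisym[OF lie, of \<xi> \<eta>] subspace_uminus[OF hsub] by metis

definition D :: "('n, 'k) vec \<Rightarrow> ('n, 'k) vec \<Rightarrow> ('n, 'k) vec" where
  "D \<xi> \<eta> = Dv (bracket c \<xi> \<eta>)"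
definition Lam :: "('n, 'k) vec \<Rightarrow> ('n, 'k) vec \<Rightarrow> 'k" where
  "Lam \<xi> \<eta> = La (bracket c \<xi> \<eta>)"

lemma D_V: "\<eta> \<in> V \<Longrightarrow> D \<xi> \<eta> \<in> V"
  unfolding D_def using DvLa(1) br_h V_h by blast

lemma br_decomp: "\<eta> \<in> V \<Longrightarrow> bracket c \<xi> \<eta> = D \<xi> \<eta> + vscale (Lam \<xi> \<eta>) e"
  unfolding D_def Lam_def using DvLa(2) br_h V_h by blast

lemma D_add: "u \<in> V \<Longrightarrow> v \<in> V \<Longrightarrow> D \<xi> (u + v) = D \<xi> u + D \<xi> v"
  unfolding D_def by (simp add: bracket_add_r DvLa_add br_h V_h)
lemma D_scale: "u \<in> V \<Longrightarrow> D \<xi> (vscale a u) = vscale a (D \<xi> u)"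
  unfolding D_def by (simp add: bracket_scale_r DvLa_scale br_h V_h)
lemma Lam_add: "u \<in> V \<Longrightarrow> v \<in> V \<Longrightarrow> Lam \<xi> (u + v) = Lam \<xi> u + Lam \<xi> v"
  unfolding Lam_def by (simp add: bracket_add_r DvLa_add br_h V_h)
lemma Lam_scale: "u \<in> V \<Longrightarrow> Lam \<xi> (vscale a u) = a * Lam \<xi> u"
  unfolding Lam_def by (simp add: bracket_scale_r DvLa_scale br_h V_h)

lemma D_sum: assumes "\<And>i. i \<in> S \<Longrightarrow> y i \<in> V"
  shows "D \<xi> (\<Sum>i\<in>S. vscale (r i) (y i)) = (\<Sum>i\<in>S. vscale (r i) (D \<xi> (y i)))"
proof (rule lin_sum_vec[OF sub])
  fix u v assume "u \<in> V" "v \<in> V" then show "D \<xi> (u + v) = D \<xi> u + D \<xi> v" by (rule D_add)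
next
  fix a u assume "u \<in> V" then show "D \<xi> (vscale a u) = vscale a (D \<xi> u)" by (rule D_scale)
next
  fix i assume "i \<in> S" then show "y i \<in> V" by (rule assms)
qed

lemma deriv:
  assumes p: "p \<in> V" and q: "q \<in> V"
  shows "\<omega> (D \<xi> p) q + \<omega> p (D \<xi> q) = 0"
proof -
  have Dp: "D \<xi> p \<in> V" and Dq: "D \<xi> q \<in> V" using D_V p q by auto
  have 1: "bracket c (bracket c \<xi> p) q = vscale (\<omega> (D \<xi> p) q) e"
    using br_decomp[OF p] brV[OF Dp q] by (simp add: bracket_add_l bracket_scale_l ecent)
  have 2: "bracket c (bracket c p q) \<xi> = 0"
    using brV[OF p q] by (simp add: bracket_scale_l ecent)
  have "bracket c (bracket c q \<xi>) p = - bracket c (bracket c \<xi> q) p"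
    by (simp only: bracket_antisym[OF lie, of q \<xi>] bracket_uminus_l)
  also have "\<dots> = - bracket c (D \<xi> q + vscale (Lam \<xi> q) e) p" by (simp only: br_decomp[OF q])
  also have "\<dots> = - (bracket c (D \<xi> q) p + vscale (Lam \<xi> q) (bracket c e p))"
    by (simp only: bracket_add_l bracket_scale_l)
  also have "\<dots> = - vscale (\<omega> (D \<xi> q) p) e" by (simp only: brV[OF Dq p] ecent) simp
  also have "\<dots> = vscale (- \<omega> (D \<xi> q) p) e" by (simp add: fun_eq_iff)
  finally have 3: "bracket c (bracket c q \<xi>) p = vscale (- \<omega> (D \<xi> q) p) e" .
  have "0 = vscale (\<omega> (D \<xi> p) q) e + vscale (- \<omega> (D \<xi> q) p) e"
    using jacobi[OF lie, of \<xi> p q] 1 2 3 by simp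
  then have "vscale (\<omega> (D \<xi> p) q - \<omega> (D \<xi> q) p) e = 0"
    by (simp add: fun_eq_iff algebra_simps) metis
  then have "\<omega> (D \<xi> p) q - \<omega> (D \<xi> q) p = 0" using e0 by (auto simp: fun_eq_iff)
  moreover have "\<omega> (D \<xi> q) p = - \<omega> p (D \<xi> q)" using antisym Dq p by blast
  ultimately show ?thesis by simp
qed

end


lemma pd_uminus: "pderiv_var i (- f) = - pderiv_var i (f :: ('n, 'k::field) poly)"
proof -
  have "pderiv_var i f + pderiv_var i (- f) = pderiv_var i (f + - f)" by (simp only: pd_add)
  then show ?thesis by (simp add: eq_neg_iff_add_eq_0 add.commute)
qed

lemma pbracket_uminus_left: "pbracket c (- f) g = - pbracket c f g"
  by (simp add: pbracket_def pd_uminus sum_negf)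

lemma pbracket_diff_left: "pbracket c (f - g) k = pbracket c f k - pbracket c g k"
  using pbracket_add_left[of c f "- g" k] by (simp add: pbracket_uminus_left)

lemma pbracket_sum_left: "pbracket c (\<Sum>i\<in>S. f i) g = (\<Sum>i\<in>S. pbracket c (f i) g)"
  by (rule additive_sum[where F="\<lambda>f. pbracket c f g"]) (auto simp: pbracket_add_left)

lemma plin_sum: "plin (\<Sum>i\<in>S. f i) = (\<Sum>i\<in>S. plin (f i))"
  for f :: "_ \<Rightarrow> ('n::finite, 'k::field) vec"
  by (rule additive_sum[where F=plin]) (auto simp: plin_add)

lemma alg_gen_minus: "f \<in> alg_gen G \<Longrightarrow> g \<in> alg_gen G \<Longrightarrow> f - g \<in> alg_gen G"
proof -
  assume f: "f \<in> alg_gen G" and g: "g \<in> alg_gen G"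
  have eq: "f - g = f + pconst (-1) * g" by (simp add: pconst_uminus)
  show ?thesis unfolding eq by (intro alg_gen.add alg_gen.mult alg_gen.const f g)
qed

lemma alg_gen_sum: "(\<And>i. i \<in> S \<Longrightarrow> f i \<in> alg_gen G) \<Longrightarrow> (\<Sum>i\<in>S. f i) \<in> alg_gen G"
proof (induction S rule: infinite_finite_induct)
  case (infinite A) then show ?case using alg_gen.const[of 0 G] by simp
next
  case empty then show ?case using alg_gen.const[of 0 G] by simp
next
  case (insert x F) then show ?case by (simp add: alg_gen.add)
qed

context heis
begin

definition u0 :: "('n, 'k) vec \<Rightarrow> ('n, 'k) vec" where
  "u0 \<xi> = (SOME v. v \<in> V \<and> (\<forall>\<eta>\<in>V. \<omega> v \<eta> = Lam \<xi> \<eta>))"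

lemma u0: "u0 \<xi> \<in> V" "\<eta> \<in> V \<Longrightarrow> \<omega> (u0 \<xi>) \<eta> = Lam \<xi> \<eta>"
proof -
  have "\<exists>v. v \<in> V \<and> (\<forall>\<eta>\<in>V. \<omega> v \<eta> = Lam \<xi> \<eta>)"
    using riesz[of "Lam \<xi>"] Lam_add Lam_scale by blast
  from someI_ex[OF this] show "u0 \<xi> \<in> V" "\<eta> \<in> V \<Longrightarrow> \<omega> (u0 \<xi>) \<eta> = Lam \<xi> \<eta>"
    unfolding u0_def by blast+
qed

definition Q :: "('n, 'k) vec \<Rightarrow> ('n, 'k) poly" where
  "Q \<xi> = (\<Sum>k\<in>Bs. plin (D \<xi> k) * plin (bd k))"

definition Fel :: "('n, 'k) vec \<Rightarrow> ('n, 'k) poly" where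
  "Fel \<xi> = plin e * plin \<xi> - pconst (1/2) * Q \<xi> - plin e * plin (u0 \<xi>)"

lemma sumD: assumes v: "v \<in> V" shows "(\<Sum>k\<in>Bs. vscale (\<omega> (bd k) v) (D \<xi> k)) = D \<xi> v"
proof -
  have "D \<xi> v = D \<xi> (\<Sum>k\<in>Bs. vscale (\<omega> (bd k) v) k)"
    by (rule arg_cong[where f="D \<xi>", OF coord[OF v]])
  also have "\<dots> = (\<Sum>k\<in>Bs. vscale (\<omega> (bd k) v) (D \<xi> k))"
    using BsV by (intro D_sum) auto
  finally show ?thesis by simp
qed

lemma sumBd: assumes v: "v \<in> V" shows "(\<Sum>k\<in>Bs. vscale (\<omega> (D \<xi> k) v) (bd k)) = D \<xi> v"
proof -
  have Dv: "D \<xi> v \<in> V" using D_V[OF v] .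
  have "\<omega> (D \<xi> k) v = \<omega> (D \<xi> v) k" if k: "k \<in> Bs" for k
  proof -
    have kV: "k \<in> V" using k BsV by auto
    have "\<omega> (D \<xi> k) v = - \<omega> k (D \<xi> v)" using deriv[OF kV v, of \<xi>] by (simp add: eq_neg_iff_add_eq_0)
    also have "\<dots> = \<omega> (D \<xi> v) k" using antisym[OF kV Dv] by simp
    finally show ?thesis .
  qed
  then have "(\<Sum>k\<in>Bs. vscale (\<omega> (D \<xi> k) v) (bd k)) = (\<Sum>k\<in>Bs. vscale (\<omega> (D \<xi> v) k) (bd k))"
    by (intro sum.cong) auto
  also have "\<dots> = D \<xi> v" using recon[OF Dv] .
  finally show ?thesis .
qed

lemma pb_plin_e: "pbracket c f (plin e) = 0" if "f \<in> alg_gen (plin ` UNIV)" for f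
proof (rule alg_gen_bracket_l[OF _ that])
  fix g :: "('n, 'k) poly" assume "g \<in> plin ` UNIV"
  then obtain y where "g = plin y" by blast
  then show "pbracket c g (plin e) = 0" by (simp add: pbracket_plin ecent')
qed

lemma pb_VV: assumes a: "a \<in> V" and b: "b \<in> V" and v: "v \<in> V"
  shows "pbracket c (plin a * plin b) (plin v) = plin (vscale (\<omega> b v) a + vscale (\<omega> a v) b) * plin e"
  using brV[OF b v] brV[OF a v]
  by (simp add: pbracket_mult_left pbracket_plin plin_scale plin_add algebra_simps)

lemma Fel_V: assumes v: "v \<in> V" shows "pbracket c (Fel \<xi>) (plin v) = 0"
proof -
  let ?E = "plin e"
  have A: "pbracket c (?E * plin \<xi>) (plin v) = ?E * plin (D \<xi> v) + pconst (Lam \<xi> v) * ?E * ?E"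
    using br_decomp[OF v, of \<xi>]
    by (simp add: pbracket_mult_left pbracket_plin ecent plin_add plin_scale algebra_simps)
  have "pbracket c (Q \<xi>) (plin v) = (\<Sum>k\<in>Bs. plin (vscale (\<omega> (bd k) v) (D \<xi> k) + vscale (\<omega> (D \<xi> k) v) (bd k)) * ?E)"
    unfolding Q_def pbracket_sum_left
    using BsV D_V bd(1) v by (intro sum.cong refl pb_VV) auto
  also have "\<dots> = (plin (\<Sum>k\<in>Bs. vscale (\<omega> (bd k) v) (D \<xi> k)) + plin (\<Sum>k\<in>Bs. vscale (\<omega> (D \<xi> k) v) (bd k))) * ?E"
    by (simp add: plin_sum plin_add sum_distrib_right sum.distrib distrib_right)
  also have "\<dots> = (plin (D \<xi> v) + plin (D \<xi> v)) * ?E"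
    by (simp only: sumD[OF v] sumBd[OF v])
  finally have B: "pbracket c (Q \<xi>) (plin v) = (plin (D \<xi> v) + plin (D \<xi> v)) * ?E" .
  have B': "pbracket c (pconst (1/2) * Q \<xi>) (plin v) = plin (D \<xi> v) * ?E"
  proof -
    have "pbracket c (pconst (1/2) * Q \<xi>) (plin v) = pconst (1/2) * ((plin (D \<xi> v) + plin (D \<xi> v)) * ?E)"
      by (simp add: pbracket_mult_left B)
    also have "\<dots> = (pconst (1/2) + pconst (1/2)) * plin (D \<xi> v) * ?E"
      by (simp add: algebra_simps)
    also have "\<dots> = plin (D \<xi> v) * ?E" by (simp add: pconst_add)
    finally show ?thesis .
  qed
  have C: "pbracket c (?E * plin (u0 \<xi>)) (plin v) = ?E * pconst (Lam \<xi> v) * ?E"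
    using brV[OF u0(1) v, of \<xi>] u0(2)[OF v, of \<xi>]
    by (simp add: pbracket_mult_left pbracket_plin ecent plin_scale algebra_simps)
  show ?thesis unfolding Fel_def pbracket_diff_left A B' C by (simp add: algebra_simps)
qed

lemma Fel_gen: "Fel \<xi> \<in> alg_gen (plin ` UNIV)"
  unfolding Fel_def Q_def
  by (intro alg_gen_minus alg_gen.mult alg_gen_sum alg_gen.const alg_gen.gen) auto

lemma Fel_Ann: "Fel \<xi> \<in> Ann c h"
  unfolding Ann_def
proof (intro CollectI ballI)
  fix \<eta> assume "\<eta> \<in> h"
  then obtain v a where va: "v \<in> V" "\<eta> = v + vscale a e" using hdecomp by blast
  have "pbracket c (Fel \<xi>) (plin \<eta>) = pbracket c (Fel \<xi>) (plin v) + pbracket c (Fel \<xi>) (pconst a * plin e)"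
    unfolding va(2) by (simp add: plin_add plin_scale pbracket_add_right)
  also have "\<dots> = 0"
    using Fel_V[OF va(1)] pb_plin_e[OF Fel_gen] by (simp add: pbracket_mult_right)
  finally show "pbracket c (Fel \<xi>) (plin \<eta>) = 0" .
qed

lemma Sym_pdiff: "f \<in> Sym h \<Longrightarrow> pdiff f x \<in> h"
  unfolding Sym_def by (rule alg_gen_pdiff[OF hsub]) auto

lemma Fel_pdiff: "\<exists>r\<in>h. pdiff (Fel \<xi>) x = vscale (peval (plin e) x) \<xi> + r"
proof -
  let ?E = "plin e"
  let ?R = "pconst (-1) * (pconst (1/2) * Q \<xi>) + pconst (-1) * (?E * plin (u0 \<xi>))"
  have eq: "Fel \<xi> = ?E * plin \<xi> + ?R" unfolding Fel_def by (simp add: pconst_uminus)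
  have hV: "plin v \<in> plin ` h" if "v \<in> V" for v using V_h that by blast
  have R: "?R \<in> Sym h" unfolding Sym_def Q_def
    using hV[OF D_V] hV[OF bd(1)] hV[OF u0(1)] e_h BsV
    by (intro alg_gen.add alg_gen.mult alg_gen_sum alg_gen.const alg_gen.gen) auto
  have "pdiff (Fel \<xi>) x = vscale (peval ?E x) \<xi> + (vscale (peval (plin \<xi>) x) e + pdiff ?R x)"
    unfolding eq pdiff_add pdiff_mult' by (simp add: add.assoc)
  moreover have "vscale (peval (plin \<xi>) x) e + pdiff ?R x \<in> h"
    using Sym_pdiff[OF R] e_h by (intro subspace_add[OF hsub] subspace_scale[OF hsub])
  ultimately show ?thesis by blast
qed

end


lemma max_iso_absorb:
  assumes lie: "is_lie_algebra c" and M: "max_isotropic_in c x U W" and W: "is_subspace W"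
    and y: "y \<in> W" and orth: "\<And>u. u \<in> U \<Longrightarrow> Phi c x y u = 0"
  shows "y \<in> U"
proof -
  have Usub: "is_subspace U" and UW: "U \<subseteq> W" and Uiso: "isotropic c x U"
    and Umax: "\<And>U'. is_subspace U' \<Longrightarrow> U \<subseteq> U' \<Longrightarrow> U' \<subseteq> W \<Longrightarrow> isotropic c x U' \<Longrightarrow> U' = U"
    using M unfolding max_isotropic_in_def by blast+
  define U' where "U' = {u + vscale t y | u t. u \<in> U}"
  have "is_subspace U'"
    unfolding is_subspace_def
  proof (intro conjI ballI allI)
    show "0 \<in> U'" unfolding U'_def using subspace_zero[OF Usub]
      by (intro CollectI exI[of _ 0] exI[of _ "0::'b"]) simp
  next
    fix a b assume "a \<in> U'" "b \<in> U'"
    then obtain u1 t1 u2 t2 where "a = u1 + vscale t1 y" "b = u2 + vscale t2 y" "u1 \<in> U" "u2 \<in> U"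
      unfolding U'_def by blast
    then show "a + b \<in> U'" unfolding U'_def
      by (intro CollectI exI[of _ "u1 + u2"] exI[of _ "t1 + t2"])
         (auto simp: subspace_add[OF Usub] fun_eq_iff algebra_simps)
  next
    fix s a assume "a \<in> U'"
    then obtain u1 t1 where "a = u1 + vscale t1 y" "u1 \<in> U" unfolding U'_def by blast
    then show "vscale s a \<in> U'" unfolding U'_def
      by (intro CollectI exI[of _ "vscale s u1"] exI[of _ "s * t1"])
         (auto simp: subspace_scale[OF Usub] fun_eq_iff algebra_simps)
  qed
  moreover have "U \<subseteq> U'" unfolding U'_def by (force intro: exI[of _ 0])
  moreover have "U' \<subseteq> W" unfolding U'_def using UW y
    by (auto intro!: subspace_add[OF W] subspace_scale[OF W])
  moreover have "isotropic c x U'"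
    unfolding isotropic_def U'_def
  proof (clarify)
    fix u1 t1 u2 t2 assume u: "u1 \<in> U" "u2 \<in> U"
    have "Phi c x u1 u2 = 0" using Uiso u unfolding isotropic_def by blast
    moreover have "Phi c x y u2 = 0" "Phi c x y u1 = 0" using orth u by auto
    moreover have "Phi c x u1 y = - Phi c x y u1" using Phi_antisym[OF lie] by blast
    moreover have "Phi c x y y = 0" using Phi_self[OF lie] by blast
    ultimately show "Phi c x (u1 + vscale t1 y) (u2 + vscale t2 y) = 0"
      by (simp add: Phi_add_l Phi_add_r Phi_scale_l Phi_scale_r)
  qed
  ultimately have "U' = U" using Umax by blast
  moreover have "y \<in> U'" unfolding U'_def using subspace_zero[OF Usub]
    by (intro CollectI exI[of _ 0] exI[of _ "1::'b"]) simp
  ultimately show ?thesis by simp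
qed


context heis
begin

lemma Phi_VV: "v \<in> V \<Longrightarrow> \<eta> \<in> V \<Longrightarrow> Phi c x v \<eta> = \<omega> v \<eta> * peval (plin e) x"
  by (simp add: Phi_def brV peval_plin sum_distrib_left mult_ac)

lemma Phi_e_r[simp]: "Phi c x y e = 0"
  by (simp add: Phi_def ecent')
lemma Phi_e_l[simp]: "Phi c x e y = 0"
  by (simp add: Phi_def ecent)

lemma Ann_orth: assumes "f \<in> Ann c h" "\<eta> \<in> h" shows "Phi c x (pdiff f x) \<eta> = 0"
proof -
  have "Phi c x (pdiff f x) \<eta> = peval (pbracket c f (plin \<eta>)) x" by (simp add: peval_pbracket)
  also have "\<dots> = 0" using assms unfolding Ann_def by simp
  finally show ?thesis .
qed

lemma dAnn_orth: assumes "a \<in> dspan (Ann c h) x" "\<eta> \<in> h" shows "Phi c x a \<eta> = 0"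
proof (rule kspan_Phi_l[of "(\<lambda>f. pdiff f x) ` Ann c h"])
  fix g assume "g \<in> (\<lambda>f. pdiff f x) ` Ann c h"
  then obtain f where "f \<in> Ann c h" "g = pdiff f x" by blast
  then show "Phi c x g \<eta> = 0" using Ann_orth[OF _ assms(2)] by blast
next
  show "a \<in> kspan ((\<lambda>f. pdiff f x) ` Ann c h)" using assms(1) unfolding dspan_def .
qed

lemma plin_e_Ann: "plin e \<in> Ann c h"
  unfolding Ann_def by (simp add: pbracket_plin ecent)

lemma h_orth_decomp:
  assumes r: "r \<in> h" and s: "peval (plin e) x \<noteq> 0" and o: "\<And>\<eta>. \<eta> \<in> V \<Longrightarrow> Phi c x r \<eta> = 0"
  shows "\<exists>a. r = vscale a e"
proof -
  obtain v a where va: "v \<in> V" "r = v + vscale a e" using hdecomp[OF r] by blast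
  have "\<omega> v \<eta> = 0" if "\<eta> \<in> V" for \<eta>
  proof -
    have "Phi c x v \<eta> = Phi c x r \<eta>" unfolding va(2) by (simp add: Phi_add_l Phi_scale_l)
    then have "\<omega> v \<eta> * peval (plin e) x = 0" using o[OF that] Phi_VV[OF va(1) that] by simp
    then show ?thesis using s by simp
  qed
  then have "v = 0" using nondeg[OF va(1)] by blast
  then show ?thesis using va by auto
qed

lemma w_in_dAnn:
  assumes s: "peval (plin e) x \<noteq> 0" and w: "\<And>\<eta>. \<eta> \<in> h \<Longrightarrow> Phi c x w \<eta> = 0"
  shows "w \<in> dspan (Ann c h) x"
proof -
  let ?s = "peval (plin e) x"
  obtain r where r: "r \<in> h" "pdiff (Fel w) x = vscale ?s w + r" using Fel_pdiff by blast
  let ?d = "pdiff (Fel w) x"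
  have d: "?d \<in> dspan (Ann c h) x" using pdiff_in_dspan[OF Fel_Ann] .
  have "Phi c x r \<eta> = 0" if "\<eta> \<in> V" for \<eta>
  proof -
    have eh: "\<eta> \<in> h" using V_h that .
    have "r = ?d - vscale ?s w" using r(2) by simp
    then have "Phi c x r \<eta> = Phi c x ?d \<eta> - ?s * Phi c x w \<eta>" by (simp add: Phi_diff_l Phi_scale_l)
    then show ?thesis using dAnn_orth[OF d eh] w[OF eh] by simp
  qed
  then obtain a where a: "r = vscale a e" using h_orth_decomp[OF r(1) s] by blast
  have ed: "e \<in> dspan (Ann c h) x" using pdiff_in_dspan[OF plin_e_Ann, of x] by simp
  have "w = vscale (1 / ?s) (?d - vscale a e)" using r(2) a s by (simp add: fun_eq_iff)
  moreover have "vscale (1 / ?s) (?d - vscale a e) \<in> dspan (Ann c h) x"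
    using d ed by (intro subspace_scale[OF dspan_subspace] subspace_diff[OF dspan_subspace] subspace_scale[OF dspan_subspace])
  ultimately show ?thesis by simp
qed

end


context heis
begin

lemma pointwise:
  fixes A B :: "('n, 'k) poly set"
  assumes A_comm: "poisson_commutative c A" and A_Ann: "A \<subseteq> Ann c h"
   and B_comm: "poisson_commutative c B" and B_S: "B \<subseteq> Sym h"
   and MA: "max_isotropic_in c x (dspan A x) (dspan (Ann c h) x)"
   and MB: "max_isotropic_in c x (dspan B x) (dspan (Sym h) x)"
   and s: "peval (plin e) x \<noteq> 0"
  shows "max_isotropic_in c x (dspan (poisson_gen c (A \<union> B)) x) (dspan UNIV x)"
proof -
  let ?P = "poisson_gen c (A \<union> B)"
  let ?s = "peval (plin e) x"
  have cas: "\<And>i j k. c i j k = - c j i k" using c_antisym[OF lie] by blast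
  have AB: "pbracket c f g = 0" if f: "f \<in> A" and g: "g \<in> B" for f g
  proof (rule alg_gen_bracket_r[of "plin ` h"])
    fix g' assume "g' \<in> plin ` h"
    then obtain \<eta> where "\<eta> \<in> h" "g' = plin \<eta>" by blast
    then show "pbracket c f g' = 0" using A_Ann f unfolding Ann_def by blast
  next
    show "g \<in> alg_gen (plin ` h)" using B_S g unfolding Sym_def by blast
  qed
  have pair: "pbracket c f g = 0" if "f \<in> A \<union> B" "g \<in> A \<union> B" for f g
  proof -
    { assume "f \<in> A" "g \<in> A" then have ?thesis using A_comm unfolding poisson_commutative_def by blast }
    moreover
    { assume "f \<in> B" "g \<in> B" then have ?thesis using B_comm unfolding poisson_commutative_def by blast }
    moreover
    { assume "f \<in> A" "g \<in> B" then have ?thesis using AB by blast }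
    moreover
    { assume "f \<in> B" "g \<in> A" then have ?thesis using AB[of g f] pbracket_antisym[where c=c and g=f and f=g, OF cas] by simp }
    ultimately show ?thesis using that by blast
  qed
  have PA: "?P \<subseteq> alg_gen (A \<union> B)" by (rule poisson_gen_sub[OF alg_gen_comm]) (rule pair)
  have dPK: "dspan ?P x \<subseteq> kspan ((\<lambda>f. pdiff f x) ` (A \<union> B))"
    using dspan_mono[OF PA, of x] dspan_alg_gen[of "A \<union> B" x] by blast
  have isoK: "isotropic c x (kspan ((\<lambda>f. pdiff f x) ` (A \<union> B)))"
  proof (rule kspan_isotropic)
    fix g1 g2 assume "g1 \<in> (\<lambda>f. pdiff f x) ` (A \<union> B)" "g2 \<in> (\<lambda>f. pdiff f x) ` (A \<union> B)"
    then obtain f1 f2 where f: "f1 \<in> A \<union> B" "f2 \<in> A \<union> B" "g1 = pdiff f1 x" "g2 = pdiff f2 x" by blast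
    have "Phi c x g1 g2 = peval (pbracket c f1 f2) x" using f by (simp add: peval_pbracket)
    also have "\<dots> = 0" using pair[OF f(1,2)] by simp
    finally show "Phi c x g1 g2 = 0" .
  qed
  have isoP: "isotropic c x (dspan ?P x)" using isoK dPK unfolding isotropic_def by blast
  have APs: "A \<subseteq> ?P" "B \<subseteq> ?P" by (auto intro: poisson_gen.gen)
  have dAP: "dspan A x \<subseteq> dspan ?P x" and dBP: "dspan B x \<subseteq> dspan ?P x"
    using dspan_mono[OF APs(1)] dspan_mono[OF APs(2)] by auto
  have dBh: "dspan B x \<subseteq> h"
    unfolding dspan_def
  proof (rule kspan_minimal[OF _ hsub], rule subsetI)
    fix y assume "y \<in> (\<lambda>f. pdiff f x) ` B"
    then obtain f where "f \<in> B" "y = pdiff f x" by blast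
    then show "y \<in> h" using Sym_pdiff B_S by blast
  qed
  have dAAnn: "dspan A x \<subseteq> dspan (Ann c h) x" using dspan_mono[OF A_Ann] .
  have maxi: "U' = dspan ?P x"
    if U': "is_subspace U'" "dspan ?P x \<subseteq> U'" "U' \<subseteq> dspan UNIV x" "isotropic c x U'" for U'
  proof
    show "dspan ?P x \<subseteq> U'" by fact
  next
    show "U' \<subseteq> dspan ?P x"
    proof
      fix u assume u: "u \<in> U'"
      have "\<exists>v\<in>V. \<forall>\<eta>\<in>V. \<omega> v \<eta> = Phi c x u \<eta> / ?s"
        by (rule riesz) (simp_all add: Phi_add_r Phi_scale_r add_divide_distrib)
      then obtain v where v: "v \<in> V" "\<And>\<eta>. \<eta> \<in> V \<Longrightarrow> \<omega> v \<eta> = Phi c x u \<eta> / ?s" by blast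
      have Pv: "Phi c x v \<eta> = Phi c x u \<eta>" if "\<eta> \<in> V" for \<eta>
        using Phi_VV[OF v(1) that, of x] v(2)[OF that] s by simp
      define w where "w = u - v"
      have uvw: "u = v + w" unfolding w_def by simp
      have worth: "Phi c x w \<eta> = 0" if eta: "\<eta> \<in> h" for \<eta>
      proof -
        obtain \<eta>' a where \<eta>: "\<eta>' \<in> V" "\<eta> = \<eta>' + vscale a e" using hdecomp[OF eta] by blast
        show ?thesis unfolding \<eta>(2) w_def using Pv[OF \<eta>(1)]
          by (simp add: Phi_add_r Phi_scale_r Phi_diff_l)
      qed
      have uiso: "Phi c x u y = 0" if "y \<in> dspan ?P x" for y
        using U'(4) u U'(2) that unfolding isotropic_def by blast
      have vB: "v \<in> dspan B x"
      proof (rule max_iso_absorb[OF lie MB dspan_subspace])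
        have "plin v \<in> Sym h" unfolding Sym_def using V_h[OF v(1)] by (blast intro: alg_gen.gen)
        then show "v \<in> dspan (Sym h) x" using pdiff_in_dspan[of "plin v" "Sym h" x] by simp
      next
        fix b assume b: "b \<in> dspan B x"
        have "Phi c x v b = Phi c x u b - Phi c x w b" unfolding w_def by (simp add: Phi_diff_l)
        moreover have "Phi c x u b = 0" using uiso[of b] dBP b by blast
        moreover have "Phi c x w b = 0" using worth[of b] dBh b by blast
        ultimately show "Phi c x v b = 0" by simp
      qed
      have wA: "w \<in> dspan A x"
      proof (rule max_iso_absorb[OF lie MA dspan_subspace])
        show "w \<in> dspan (Ann c h) x" by (rule w_in_dAnn[OF s worth])
      next
        fix a assume a: "a \<in> dspan A x"
        have "Phi c x v a = - Phi c x a v" using Phi_antisym[OF lie] by blast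
        also have "\<dots> = 0" using dAnn_orth[of a x v] dAAnn a V_h[OF v(1)] by auto
        finally have "Phi c x v a = 0" .
        moreover have "Phi c x w a = Phi c x u a - Phi c x v a" unfolding w_def by (simp add: Phi_diff_l)
        moreover have "Phi c x u a = 0" using uiso[of a] dAP a by blast
        ultimately show "Phi c x w a = 0" by simp
      qed
      show "u \<in> dspan ?P x" unfolding uvw
        using vB wA dBP dAP by (intro subspace_add[OF dspan_subspace]) auto
    qed
  qed
  show ?thesis unfolding max_isotropic_in_def
    using dspan_subspace isoP maxi dspan_mono[of ?P UNIV x] by blast
qed

end


theorem proposition5:
  fixes c :: "'n::finite \<Rightarrow> 'n \<Rightarrow> 'n \<Rightarrow> 'k::field_char_0"
    and h :: "('n, 'k) vec set" and m :: nat
    and A B :: "('n, 'k) poly set"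
  assumes lie: "is_lie_algebra c"
    and ideal: "is_ideal c h"
    and heis: "is_heisenberg c h m"
    and cent: "center c UNIV = center c h"
    and A_sub: "is_subalgebra A" and A_comm: "poisson_commutative c A"
    and A_Ann: "A \<subseteq> Ann c h" and A_compl: "complete_in c A (Ann c h)"
    and B_sub: "is_subalgebra B" and B_comm: "poisson_commutative c B"
    and B_S: "B \<subseteq> Sym h" and B_compl: "complete_in c B (Sym h)"
  shows "complete_in c (poisson_gen c (A \<union> B)) UNIV"
proof -
  obtain V e \<omega> where H: "is_subspace V" "has_dim V (2 * m)" "e \<noteq> 0" "e \<notin> V"
      "h = {v + vscale a e | v a. v \<in> V}"
      "\<forall>\<xi>\<in>h. bracket c e \<xi> = 0 \<and> bracket c \<xi> e = 0"
      "symplectic_on V \<omega>"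
      "\<forall>\<xi>1\<in>V. \<forall>\<xi>2\<in>V. bracket c \<xi>1 \<xi>2 = vscale (\<omega> \<xi>1 \<xi>2) e"
    using heis unfolding is_heisenberg_def by blast
  obtain Bs where Bs: "finite Bs" "lin_indep Bs" "kspan Bs = V"
    using H(2) unfolding has_dim_def by blast
  have hsub: "is_subspace h" and hideal: "\<And>\<xi> \<eta>. \<xi> \<in> h \<Longrightarrow> bracket c \<xi> \<eta> \<in> h"
    using ideal unfolding is_ideal_def by blast+
  have eh: "e \<in> h"
  proof -
    have "e = 0 + vscale 1 e" by simp
    then show ?thesis unfolding H(5) using subspace_zero[OF H(1)] by blast
  qed
  have "e \<in> center c h" unfolding center_def using eh H(6) by blast
  then have "e \<in> center c UNIV" using cent by simp
  then have ecent: "\<And>y. bracket c e y = 0" unfolding center_def by blast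
  interpret HH: heis V \<omega> Bs c h e
    by unfold_locales (use H Bs hsub hideal lie ecent in auto)
  let ?MA = "\<lambda>x. max_isotropic_in c x (dspan A x) (dspan (Ann c h) x)"
  let ?MB = "\<lambda>x. max_isotropic_in c x (dspan B x) (dspan (Sym h) x)"
  have "generically (\<lambda>x. (?MA x \<and> ?MB x) \<and> peval (plin e) x \<noteq> 0)"
    using generically_and[OF generically_and[OF A_compl[unfolded complete_in_def] B_compl[unfolded complete_in_def]]
        generically_plin[OF H(3)]] .
  then obtain p :: "('n, 'k) poly" where p: "p \<noteq> 0" "\<And>x. peval p x \<noteq> 0 \<Longrightarrow> (?MA x \<and> ?MB x) \<and> peval (plin e) x \<noteq> 0"
    unfolding generically_def by blast
  show ?thesis unfolding complete_in_def generically_def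
  proof (intro exI[of _ p] conjI allI impI)
    show "p \<noteq> 0" by fact
  next
    fix x assume "peval p x \<noteq> 0"
    then have "?MA x" "?MB x" "peval (plin e) x \<noteq> 0" using p(2) by blast+
    then show "max_isotropic_in c x (dspan (poisson_gen c (A \<union> B)) x) (dspan UNIV x)"
      using HH.pointwise[OF A_comm A_Ann B_comm B_S] by blast
  qed
qed


end
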